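(* Let $\pi,\tau\in S_n$ with $d(\pi,\tau)=1$, and let $\lambda=\lambda(\pi)$, $\mu=\lambda(\tau)$. Then \[\Delta(\lambda,\mu)\le\sqrt{n/2}.\]
   Context: Permutations are written in one-line notation. For $\pi\in S_n$, $\lambda(\pi)$ denotes the shape (a partition of $n$) of the tableaux associated with $\pi$ by the RSK correspondence. The distance $d(\pi,\tau)$ is the least number of adjacent transpositions $(k,k+1)$, $1\le k\le n-1$, whose successive left multiplication transforms $\pi$ into $\tau$. For partitions $\lambda,\mu$ of $n$ (parts padded with zeros), $\Delta(\lambda,\mu)=\frac12\sum_{i=1}^n|\lambda_i-\mu_i|$. *)

theory Defs
  imports Complex_Main
begin

definition is_perm :: "nat \<Rightarrow> nat list \<Rightarrow> bool" where
  "is_perm n w \<longleftrightarrow> distinct w \<and> set w = {1..n}"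

fun row_insert :: "nat \<Rightarrow> nat list \<Rightarrow> nat list \<times> nat option" where
  "row_insert x [] = ([x], None)"
| "row_insert x (y # ys) =
     (if x < y then (x # ys, Some y)
      else (case row_insert x ys of (r, b) \<Rightarrow> (y # r, b)))"

text \<open>Insertion into a tableau (list of rows, top row first).\<close>
fun tab_insert :: "nat \<Rightarrow> nat list list \<Rightarrow> nat list list" where
  "tab_insert x [] = [[x]]"
| "tab_insert x (r # rs) =
     (case row_insert x r of
        (r', None) \<Rightarrow> r' # rs
      | (r', Some y) \<Rightarrow> r' # tab_insert y rs)"

definition rsk_P :: "nat list \<Rightarrow> nat list list" where
  "rsk_P w = foldl (\<lambda>T x. tab_insert x T) [] w"

definition rsk_shape :: "nat list \<Rightarrow> nat list" where
  "rsk_shape w = map length (rsk_P w)"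

text \<open>Parts of a partition padded with zeros (0-based index).\<close>
definition part :: "nat list \<Rightarrow> nat \<Rightarrow> nat" where
  "part lam i = (if i < length lam then lam ! i else 0)"

definition Delta :: "nat \<Rightarrow> nat list \<Rightarrow> nat list \<Rightarrow> real" where
  "Delta n lam mu = (1/2) * (\<Sum>i<n. \<bar>real (part lam i) - real (part mu i)\<bar>)"

definition adj_swap :: "nat \<Rightarrow> nat \<Rightarrow> nat" where
  "adj_swap k x = (if x = k then k + 1 else if x = k + 1 then k else x)"

text \<open>Left multiplication by (k,k+1), 1 <= k <= n-1: (s_k o pi)(i) = s_k(pi(i)).\<close>
definition adj_step :: "nat \<Rightarrow> nat list \<Rightarrow> nat list \<Rightarrow> bool" where
  "adj_step n p q \<longleftrightarrow> (\<exists>k. 1 \<le> k \<and> k \<le> n - 1 \<and> q = map (adj_swap k) p)"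

definition perm_dist :: "nat \<Rightarrow> nat list \<Rightarrow> nat list \<Rightarrow> nat" where
  "perm_dist n p q = (LEAST m. (adj_step n ^^ m) p q)"

end

theory Submission
  imports Defs
begin


fun before :: "nat list \<Rightarrow> nat \<Rightarrow> nat \<Rightarrow> bool" where
  "before [] x y = False"
| "before (z#zs) x y = ((z = x \<and> y \<in> set zs) \<or> before zs x y)"

lemma before_append[simp]:
  "before (xs@ys) x y \<longleftrightarrow> before xs x y \<or> before ys x y \<or> (x \<in> set xs \<and> y \<in> set ys)"
  by (induction xs) auto

lemma before_set: "before w x y \<Longrightarrow> x \<in> set w \<and> y \<in> set w"
  by (induction w) auto

lemma before_asym: "distinct w \<Longrightarrow> before w x y \<Longrightarrow> \<not> before w y x"
  by (induction w) (auto dest: before_set)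

lemma before_irrefl: "distinct w \<Longrightarrow> \<not> before w x x"
  using before_asym by blast

lemma before_trans: "distinct w \<Longrightarrow> before w x y \<Longrightarrow> before w y z \<Longrightarrow> before w x z"
  by (induction w) (auto dest: before_set)

lemma before_total: "x \<in> set w \<Longrightarrow> y \<in> set w \<Longrightarrow> x \<noteq> y \<Longrightarrow> before w x y \<or> before w y x"
  by (induction w) auto

definition chainfam :: "nat list \<Rightarrow> nat \<Rightarrow> nat set \<Rightarrow> bool" where
  "chainfam w k S \<longleftrightarrow> S \<subseteq> set w \<and> (\<exists>col. (\<forall>x\<in>S. col x < k) \<and>
      (\<forall>x\<in>S. \<forall>y\<in>S. x < y \<and> col x = col y \<longrightarrow> before w x y))"

definition inc :: "nat list \<Rightarrow> nat \<Rightarrow> nat" where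
  "inc w k = Max (card ` {S. chainfam w k S})"

lemma chainfam_finite: "finite {S. chainfam w k S}"
proof -
  have "{S. chainfam w k S} \<subseteq> Pow (set w)" by (auto simp: chainfam_def)
  then show ?thesis by (rule finite_subset) simp
qed

lemma chainfam_empty: "chainfam w k {}"
  by (auto simp: chainfam_def)

lemma inc_ge: "chainfam w k S \<Longrightarrow> card S \<le> inc w k"
  unfolding inc_def using chainfam_finite by (intro Max_ge) auto

lemma inc_obtain: obtains S where "chainfam w k S" "card S = inc w k"
proof -
  have "inc w k \<in> card ` {S. chainfam w k S}"
    unfolding inc_def using chainfam_finite[of w k] chainfam_empty[of w k] by (intro Max_in) auto
  then show ?thesis using that by auto
qed

lemma inc_le_transfer:
  assumes "\<And>S. chainfam u k S \<Longrightarrow> \<exists>S'. chainfam v k S' \<and> card S \<le> card S'"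
  shows "inc u k \<le> inc v k"
proof -
  obtain S where "chainfam u k S" "card S = inc u k" by (rule inc_obtain)
  with assms obtain S' where "chainfam v k S'" "card S \<le> card S'" by blast
  then show ?thesis using inc_ge[of v k S'] \<open>card S = inc u k\<close> by simp
qed

lemma swap_before:
  assumes "distinct (p@[a,b]@s)"
  shows "before (p@[b,a]@s) x y \<longleftrightarrow> (before (p@[a,b]@s) x y \<and> \<not>(x = a \<and> y = b)) \<or> (x = b \<and> y = a)"
  using assms by (auto dest: before_set)

lemma easy_swap:
  assumes "distinct (p@[a,b]@s)" "a < b" "chainfam (p@[b,a]@s) k S"
  shows "chainfam (p@[a,b]@s) k S"
proof -
  from assms(3) obtain col where S: "S \<subseteq> set (p@[b,a]@s)" and c1: "\<forall>x\<in>S. col x < k"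
    and c2: "\<forall>x\<in>S. \<forall>y\<in>S. x < y \<and> col x = col y \<longrightarrow> before (p@[b,a]@s) x y"
    unfolding chainfam_def by blast
  have "\<forall>x\<in>S. \<forall>y\<in>S. x < y \<and> col x = col y \<longrightarrow> before (p@[a,b]@s) x y"
  proof (intro ballI impI)
    fix x y assume "x \<in> S" "y \<in> S" "x < y \<and> col x = col y"
    then have "before (p@[b,a]@s) x y" using c2 by blast
    then show "before (p@[a,b]@s) x y" using swap_before[OF assms(1)] \<open>x < y \<and> col x = col y\<close> assms(2)
      by auto
  qed
  then show ?thesis using S c1 unfolding chainfam_def by auto
qed

lemma chainfamI:
  assumes "S \<subseteq> set w" "\<And>x. x \<in> S \<Longrightarrow> col x < k"
    "\<And>x y. x \<in> S \<Longrightarrow> y \<in> S \<Longrightarrow> x < y \<Longrightarrow> col x = col y \<Longrightarrow> before w x y"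
  shows "chainfam w k S"
  using assms unfolding chainfam_def by blast

lemma hard1:
  assumes d: "distinct (p@[c,a,b]@s)" and ac: "a < c" and cb: "c < b"
    and cf: "chainfam (p@[c,a,b]@s) k S"
  shows "\<exists>S'. chainfam (p@[c,b,a]@s) k S' \<and> card S \<le> card S'"
proof -
  let ?u = "p@[c,a,b]@s" and ?v = "p@[c,b,a]@s"
  from cf obtain col where S: "S \<subseteq> set ?u" and c1: "\<And>x. x\<in>S \<Longrightarrow> col x < k"
    and P: "\<And>x y. x\<in>S \<Longrightarrow> y\<in>S \<Longrightarrow> x < y \<Longrightarrow> col x = col y \<Longrightarrow> before ?u x y"
    unfolding chainfam_def by blast
  have d': "distinct ((p@[c])@[a,b]@s)" using d by simp
  have sw: "before ?v x y \<longleftrightarrow> (before ?u x y \<and> \<not>(x = a \<and> y = b)) \<or> (x = b \<and> y = a)" for x y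
    using swap_before[OF d', of x y] by simp
  have fin: "finite S" using S by (rule finite_subset) simp
  show ?thesis
  proof (cases "a \<in> S \<and> b \<in> S \<and> col a = col b")
    case False
    have "chainfam ?v k S"
    proof (rule chainfamI[where col=col])
      show "S \<subseteq> set ?v" using S by auto
      show "x \<in> S \<Longrightarrow> col x < k" for x by (rule c1)
      fix x y assume "x \<in> S" "y \<in> S" "x < y" "col x = col y"
      then show "before ?v x y" using P[of x y] sw False by auto
    qed
    then show ?thesis by blast
  next
    case True
    then have aS: "a \<in> S" and bS: "b \<in> S" and cab: "col a = col b" by auto
    show ?thesis
    proof (cases "c \<in> S")
      case False
      let ?S' = "insert c (S - {a})"
      let ?col = "col(c := col a)"
      have "chainfam ?v k ?S'"
      proof (rule chainfamI[where col="?col"])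
        show "?S' \<subseteq> set ?v" using S by auto
        show "x \<in> ?S' \<Longrightarrow> ?col x < k" for x using c1 aS by auto
        fix x y assume xS: "x \<in> ?S'" and yS: "y \<in> ?S'" and xy: "x < y" and cxy: "?col x = ?col y"
        show "before ?v x y"
        proof (cases "x = c")
          case True
          then have yS': "y \<in> S" "y \<noteq> a" "col y = col a" using yS xy cxy False by auto
          have "before ?u a y" using P[of a y] aS yS' xy True ac by auto
          then show ?thesis using True yS' d by (auto dest: before_set)
        next
          case xc: False
          show ?thesis
          proof (cases "y = c")
            case True
            then have xS': "x \<in> S" "x \<noteq> a" "col x = col a" using xS xc cxy by auto
            show ?thesis
            proof (cases "x < a")
              case True
              have "before ?u x a" using P[of x a] xS' aS True by auto
              then show ?thesis using \<open>y = c\<close> d xy by (auto dest: before_set)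
            next
              case False
              then have "a < x" using xS' by auto
              then have "before ?u a x" "before ?u x b" using P[of a x] P[of x b] xS' aS bS cab xy True cb by auto
              then show ?thesis using d xS' by (auto dest: before_set)
            qed
          next
            case yc: False
            then have "x \<in> S" "y \<in> S" "x \<noteq> a" "col x = col y" using xS yS xc cxy by auto
            then show ?thesis using P[of x y] xy sw by auto
          qed
        qed
      qed
      moreover have "card ?S' = card S"
        using fin aS False by (simp add: card_insert_if) (metis Suc_pred card_gt_0_iff empty_iff)
      ultimately show ?thesis by (intro exI[of _ ?S']) simp
    next
      case cS: True
      have cca: "col c \<noteq> col a"
      proof
        assume "col c = col a"
        then have "before ?u a c" using P[of a c] aS cS ac by auto
        then show False using d by (auto dest: before_set)
      qed
      have nobetween: "False" if "y \<in> S" "col y = col a" "a < y" "y < b" for y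
      proof -
        have "before ?u a y" "before ?u y b" using P[of a y] P[of y b] that aS bS cab by auto
        then show False using d by (auto dest: before_set)
      qed
      define col' where "col' x = (if col x = col a \<and> b \<le> x then col c else if col x = col c \<and> c < x then col a else col x)" for x
      have "chainfam ?v k S"
      proof (rule chainfamI[where col=col'])
        show "S \<subseteq> set ?v" using S by auto
        show "x \<in> S \<Longrightarrow> col' x < k" for x using c1 aS cS unfolding col'_def by auto
        fix x y assume xS: "x \<in> S" and yS: "y \<in> S" and xy: "x < y" and cxy: "col' x = col' y"
        have "before ?u x y"
        proof -
          consider "col x = col a \<and> b \<le> x" | "col x = col c \<and> c < x" | "\<not>(col x = col a \<and> b \<le> x) \<and> \<not>(col x = col c \<and> c < x)"
            by blast
          then show ?thesis
          proof cases
            case 1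
            then have "col y = col a" using cxy xy cca cb unfolding col'_def by (auto split: if_splits)
            then show ?thesis using P[of x y] xS yS xy 1 by auto
          next
            case 2
            then have "col y = col c \<or> (col y = col a \<and> y < b)" using cxy xy cca unfolding col'_def by (auto split: if_splits)
            then show ?thesis
            proof
              assume "col y = col a \<and> y < b"
              then have "y \<le> a" using nobetween[of y] yS by force
              then show ?thesis using 2 xy ac by auto
            qed (use P[of x y] xS yS xy 2 in auto)
          next
            case 3
            show ?thesis
            proof (cases "col y = col a \<and> b \<le> y")
              case True
              then have "col x = col c" "x \<le> c" using cxy 3 cca unfolding col'_def by (auto split: if_splits)
              have "before ?u x c \<or> x = c" using P[of x c] xS cS \<open>col x = col c\<close> \<open>x \<le> c\<close> by force
              moreover have "before ?u a y \<or> y = a" using P[of a y] aS yS True cab ac cb by auto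
              ultimately show ?thesis using d cS True ac cb by (auto dest: before_set)
            next
              case False
              show ?thesis
              proof (cases "col y = col c \<and> c < y")
                case True
                then have "col x = col a" "x < b" using cxy 3 cca unfolding col'_def by (auto split: if_splits)
                then have "x \<le> a" using nobetween[of x] xS by force
                then have "before ?u x a \<or> x = a" using P[of x a] xS aS \<open>col x = col a\<close> by force
                moreover have "before ?u c y" using P[of c y] cS yS True by auto
                moreover have "y \<noteq> a" "y \<noteq> b" using True cca cab by auto
                ultimately show ?thesis using d by (auto dest: before_set)
              next
                case False
                then have "col x = col y" using cxy 3 \<open>\<not> (col y = col a \<and> b \<le> y)\<close> unfolding col'_def by auto
                then show ?thesis using P[of x y] xS yS xy by auto
              qed
            qed
          qed
        qed
        moreover have "\<not> (x = a \<and> y = b)" using cxy cca ac cb cab unfolding col'_def by auto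
        ultimately show "before ?v x y" using sw by auto
      qed
      then show ?thesis by blast
    qed
  qed
qed


lemma hard2:
  assumes d: "distinct (p@[a,b,c]@s)" and ac: "a < c" and cb: "c < b"
    and cf: "chainfam (p@[a,b,c]@s) k S"
  shows "\<exists>S'. chainfam (p@[b,a,c]@s) k S' \<and> card S \<le> card S'"
proof -
  let ?u = "p@[a,b,c]@s" and ?v = "p@[b,a,c]@s"
  from cf obtain col where S: "S \<subseteq> set ?u" and c1: "\<And>x. x\<in>S \<Longrightarrow> col x < k"
    and P: "\<And>x y. x\<in>S \<Longrightarrow> y\<in>S \<Longrightarrow> x < y \<Longrightarrow> col x = col y \<Longrightarrow> before ?u x y"
    unfolding chainfam_def by blast
  have d': "distinct (p@[a,b]@(c#s))" using d by simp
  have sw: "before ?v x y \<longleftrightarrow> (before ?u x y \<and> \<not>(x = a \<and> y = b)) \<or> (x = b \<and> y = a)" for x y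
    using swap_before[OF d', of x y] by simp
  have fin: "finite S" using S by (rule finite_subset) simp
  show ?thesis
  proof (cases "a \<in> S \<and> b \<in> S \<and> col a = col b")
    case False
    have "chainfam ?v k S"
    proof (rule chainfamI[where col=col])
      show "S \<subseteq> set ?v" using S by auto
      show "x \<in> S \<Longrightarrow> col x < k" for x by (rule c1)
      fix x y assume "x \<in> S" "y \<in> S" "x < y" "col x = col y"
      then show "before ?v x y" using P[of x y] sw False by auto
    qed
    then show ?thesis by blast
  next
    case True
    then have aS: "a \<in> S" and bS: "b \<in> S" and cab: "col a = col b" by auto
    have nobetween: "False" if "y \<in> S" "col y = col a" "a < y" "y < b" for y
    proof -
      have "before ?u a y" "before ?u y b" using P[of a y] P[of y b] that aS bS cab by auto
      then show False using d by (auto dest: before_set)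
    qed
    show ?thesis
    proof (cases "c \<in> S")
      case False
      let ?S' = "insert c (S - {b})"
      let ?col = "col(c := col b)"
      have "chainfam ?v k ?S'"
      proof (rule chainfamI[where col="?col"])
        show "?S' \<subseteq> set ?v" using S by auto
        show "x \<in> ?S' \<Longrightarrow> ?col x < k" for x using c1 bS by auto
        fix x y assume xS: "x \<in> ?S'" and yS: "y \<in> ?S'" and xy: "x < y" and cxy: "?col x = ?col y"
        show "before ?v x y"
        proof (cases "x = c")
          case True
          then have yS': "y \<in> S" "y \<noteq> b" "col y = col a" using yS xy cxy False cab by auto
          have "before ?u a y" using P[of a y] aS yS' xy True ac by auto
          then show ?thesis using True yS' d False by (auto dest: before_set)
        next
          case xc: False
          show ?thesis
          proof (cases "y = c")
            case True
            then have xS': "x \<in> S" "x \<noteq> b" "col x = col a" using xS xc cxy cab by auto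
            show ?thesis
            proof (cases "x < a")
              case True
              have "before ?u x a" using P[of x a] xS' aS True by auto
              then show ?thesis using \<open>y = c\<close> d xy by (auto dest: before_set)
            next
              case False
              show ?thesis
              proof (cases "x = a")
                case True then show ?thesis using \<open>y = c\<close> by simp
              next
                case False
                then have "a < x" using \<open>\<not> x < a\<close> by auto
                then show ?thesis using nobetween[of x] xS' xy \<open>y = c\<close> cb by auto
              qed
            qed
          next
            case yc: False
            then have "x \<in> S" "y \<in> S" "y \<noteq> b" "col x = col y" using xS yS xc cxy by auto
            then show ?thesis using P[of x y] xy sw by auto
          qed
        qed
      qed
      moreover have "card ?S' = card S"
        using fin bS False by (simp add: card_insert_if) (metis Suc_pred card_gt_0_iff empty_iff)
      ultimately show ?thesis by (intro exI[of _ ?S']) simp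
    next
      case cS: True
      have ccb: "col c \<noteq> col a"
      proof
        assume "col c = col a"
        then have "before ?u c b" using P[of c b] bS cS cb cab by auto
        then show False using d by (auto dest: before_set)
      qed
      define col' where "col' x = (if col x = col a \<and> b \<le> x then col c else if col x = col c \<and> c \<le> x then col a else col x)" for x
      have "chainfam ?v k S"
      proof (rule chainfamI[where col=col'])
        show "S \<subseteq> set ?v" using S by auto
        show "x \<in> S \<Longrightarrow> col' x < k" for x using c1 aS cS unfolding col'_def by auto
        fix x y assume xS: "x \<in> S" and yS: "y \<in> S" and xy: "x < y" and cxy: "col' x = col' y"
        have "before ?u x y"
        proof -
          consider "col x = col a \<and> b \<le> x" | "col x = col c \<and> c \<le> x" | "\<not>(col x = col a \<and> b \<le> x) \<and> \<not>(col x = col c \<and> c \<le> x)"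
            by blast
          then show ?thesis
          proof cases
            case 1
            then have "col y = col a" using cxy xy ccb cb unfolding col'_def by (auto split: if_splits)
            then show ?thesis using P[of x y] xS yS xy 1 by auto
          next
            case 2
            then have "col y = col c \<or> (col y = col a \<and> y < b)" using cxy xy ccb unfolding col'_def by (auto split: if_splits)
            then show ?thesis
            proof
              assume "col y = col a \<and> y < b"
              then have "y \<le> a" using nobetween[of y] yS by force
              then show ?thesis using 2 xy ac by auto
            qed (use P[of x y] xS yS xy 2 in auto)
          next
            case 3
            show ?thesis
            proof (cases "col y = col a \<and> b \<le> y")
              case True
              then have "col x = col c" "x < c" using cxy 3 ccb unfolding col'_def by (auto split: if_splits)
              have "before ?u x c" using P[of x c] xS cS \<open>col x = col c\<close> \<open>x < c\<close> by force
              moreover have "before ?u b y \<or> y = b" using P[of b y] bS yS True cab by force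
              moreover have "x \<noteq> a" "x \<noteq> b" using \<open>col x = col c\<close> ccb cab by auto
              ultimately show ?thesis using d by (auto dest: before_set)
            next
              case False
              show ?thesis
              proof (cases "col y = col c \<and> c \<le> y")
                case True
                then have "col x = col a" "x < b" using cxy 3 ccb unfolding col'_def by (auto split: if_splits)
                then have "x \<le> a" using nobetween[of x] xS by force
                then have "before ?u x a \<or> x = a" using P[of x a] xS aS \<open>col x = col a\<close> by force
                moreover have "before ?u c y \<or> y = c" using P[of c y] cS yS True by force
                ultimately show ?thesis using d by (auto dest: before_set)
              next
                case False
                then have "col x = col y" using cxy 3 \<open>\<not> (col y = col a \<and> b \<le> y)\<close> unfolding col'_def by auto
                then show ?thesis using P[of x y] xS yS xy by auto
              qed
            qed
          qed
        qed
        moreover have "\<not> (x = a \<and> y = b)" using cxy ccb ac cb cab unfolding col'_def by auto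
        ultimately show "before ?v x y" using sw by auto
      qed
      then show ?thesis by blast
    qed
  qed
qed



inductive kstep :: "nat list \<Rightarrow> nat list \<Rightarrow> bool" where
  k1: "x < y \<Longrightarrow> y < z \<Longrightarrow> kstep (p@[y,z,x]@s) (p@[y,x,z]@s)"
| k2: "x < y \<Longrightarrow> y < z \<Longrightarrow> kstep (p@[x,z,y]@s) (p@[z,x,y]@s)"

definition keq :: "nat list \<Rightarrow> nat list \<Rightarrow> bool" where
  "keq = (\<lambda>u v. kstep u v \<or> kstep v u)\<^sup>*\<^sup>*"

lemma kstep_mset: "kstep u v \<Longrightarrow> set u = set v \<and> (distinct u \<longleftrightarrow> distinct v)"
  by (induction rule: kstep.induct) auto

lemma kstep_inc:
  assumes "kstep u v" "distinct u"
  shows "inc u k = inc v k"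
  using assms
proof (induction rule: kstep.induct)
  case (k1 x y z p s)
  have a: "inc (p@[y,z,x]@s) k \<le> inc (p@[y,x,z]@s) k"
  proof (rule inc_le_transfer)
    fix S assume "chainfam (p@[y,z,x]@s) k S"
    then have "chainfam ((p@[y])@[x,z]@s) k S"
      using easy_swap[of "p@[y]" x z s k S] k1 by auto
    then show "\<exists>S'. chainfam (p@[y,x,z]@s) k S' \<and> card S \<le> card S'" by auto
  qed
  have b: "inc (p@[y,x,z]@s) k \<le> inc (p@[y,z,x]@s) k"
  proof (rule inc_le_transfer)
    fix S assume "chainfam (p@[y,x,z]@s) k S"
    then show "\<exists>S'. chainfam (p@[y,z,x]@s) k S' \<and> card S \<le> card S'"
      using hard1[of p y x z s k S] k1 by auto
  qed
  from a b show ?case by simp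
next
  case (k2 x y z p s)
  have a: "inc (p@[z,x,y]@s) k \<le> inc (p@[x,z,y]@s) k"
  proof (rule inc_le_transfer)
    fix S assume "chainfam (p@[z,x,y]@s) k S"
    then have "chainfam (p@[x,z]@(y#s)) k S"
      using easy_swap[of p x z "y#s" k S] k2 by auto
    then show "\<exists>S'. chainfam (p@[x,z,y]@s) k S' \<and> card S \<le> card S'" by auto
  qed
  have b: "inc (p@[x,z,y]@s) k \<le> inc (p@[z,x,y]@s) k"
  proof (rule inc_le_transfer)
    fix S assume "chainfam (p@[x,z,y]@s) k S"
    then show "\<exists>S'. chainfam (p@[z,x,y]@s) k S' \<and> card S \<le> card S'"
      using hard2[of p x z y s k S] k2 by auto
  qed
  from a b show ?case by simp
qed

lemma kstep_rev: "kstep u v \<Longrightarrow> kstep (rev u) (rev v)"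
proof (induction rule: kstep.induct)
  case (k1 x y z p s)
  then show ?case using kstep.k2[of x y z "rev s" "rev p"] by simp
next
  case (k2 x y z p s)
  then show ?case using kstep.k1[of x y z "rev s" "rev p"] by simp
qed

lemma kstep_ctx: "kstep u v \<Longrightarrow> kstep (q@u@r) (q@v@r)"
proof (induction rule: kstep.induct)
  case (k1 x y z p s)
  then show ?case using kstep.k1[of x y z "q@p" "s@r"] by simp
next
  case (k2 x y z p s)
  then show ?case using kstep.k2[of x y z "q@p" "s@r"] by simp
qed

lemma keq_refl[simp]: "keq u u" unfolding keq_def by simp

lemma keq_trans: "keq u v \<Longrightarrow> keq v w \<Longrightarrow> keq u w"
  unfolding keq_def by (rule rtranclp_trans)

lemma keq_step: "kstep u v \<Longrightarrow> keq u v"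
  unfolding keq_def by auto

lemma keq_ctx: "keq u v \<Longrightarrow> keq (q@u@r) (q@v@r)"
  unfolding keq_def
proof (induction rule: rtranclp_induct)
  case base then show ?case by simp
next
  case (step y z)
  from step.hyps(2) have "kstep (q@y@r) (q@z@r) \<or> kstep (q@z@r) (q@y@r)" using kstep_ctx by blast
  then show ?case using step.IH rtranclp.rtrancl_into_rtrancl[of _ "q@u@r" "q@y@r" "q@z@r"] by blast
qed

lemma keq_rev: "keq u v \<Longrightarrow> keq (rev u) (rev v)"
  unfolding keq_def
proof (induction rule: rtranclp_induct)
  case base then show ?case by simp
next
  case (step y z)
  from step.hyps(2) have "kstep (rev y) (rev z) \<or> kstep (rev z) (rev y)" using kstep_rev by blast
  then show ?case using step.IH rtranclp.rtrancl_into_rtrancl[of _ "rev u" "rev y" "rev z"] by blast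
qed

lemma keq_mset: "keq u v \<Longrightarrow> set u = set v \<and> (distinct u \<longleftrightarrow> distinct v)"
  unfolding keq_def
  by (induction rule: rtranclp_induct) (auto dest: kstep_mset)

lemma keq_inc: "keq u v \<Longrightarrow> distinct u \<Longrightarrow> inc u k = inc v k"
  unfolding keq_def
proof (induction rule: rtranclp_induct)
  case base then show ?case by simp
next
  case (step y z)
  have "distinct y" using step.hyps(1) step.prems keq_mset[unfolded keq_def] by blast
  then show ?case using step kstep_inc kstep_mset by metis
qed

lemma moveleft:
  assumes "sorted_wrt (<) (y#R2)" "x < y"
  shows "keq (y#R2@[x]@s) (y#x#R2@s)"
  using assms
proof (induction R2 arbitrary: s rule: rev_induct)
  case Nil then show ?case by simp
next
  case (snoc z R2)
  obtain q w where qw: "y#R2 = q@[w]" by (metis append_butlast_last_id list.distinct(1))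
  have "w \<in> set (y#R2)" using qw by (metis in_set_conv_decomp)
  then have "w < z" "x < w" using snoc.prems
    by (auto simp: sorted_wrt_append)
  then have "kstep (q@[w,z,x]@s) (q@[w,x,z]@s)" using kstep.k1 by blast
  then have "keq (y#(R2@[z])@[x]@s) (y#R2@[x]@(z#s))" using qw
    by (metis append.assoc append_Cons append_Nil keq_step)
  moreover have "keq (y#R2@[x]@(z#s)) (y#x#R2@(z#s))"
    using snoc by (simp add: sorted_wrt_append)
  ultimately show ?case by (simp add: keq_trans)
qed

lemma moveright:
  assumes "sorted_wrt (<) R1" "\<forall>t\<in>set R1. t < m" "m < y"
  shows "keq (R1@[y,m]@s) (y#R1@[m]@s)"
  using assms
proof (induction R1 arbitrary: m s rule: rev_induct)
  case Nil then show ?case by simp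
next
  case (snoc t R1)
  have "t < m" using snoc.prems by auto
  then have "kstep (R1@[t,y,m]@s) (R1@[y,t,m]@s)" using kstep.k2 snoc.prems by blast
  then have "keq ((R1@[t])@[y,m]@s) (R1@[y,t]@(m#s))" by (simp add: keq_step)
  moreover have "keq (R1@[y,t]@(m#s)) (y#R1@[t]@(m#s))"
    using snoc.IH[of t "m#s"] snoc.prems \<open>t < m\<close> by (auto simp: sorted_wrt_append)
  ultimately show ?case by (simp add: keq_trans)
qed

lemma row_insert_char:
  assumes "sorted_wrt (<) r" "x \<notin> set r"
  shows "(row_insert x r = (r@[x], None) \<and> (\<forall>z\<in>set r. z < x)) \<or>
    (\<exists>R1 y R2. r = R1@y#R2 \<and> (\<forall>z\<in>set R1. z<x) \<and> x < y \<and> row_insert x r = (R1@x#R2, Some y))"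
  using assms
proof (induction r)
  case Nil then show ?case by simp
next
  case (Cons a r)
  show ?case
  proof (cases "x < a")
    case True
    then show ?thesis by (intro disjI2 exI[of _ "[]"]) auto
  next
    case False
    then have "a < x" using Cons.prems by auto
    from Cons.IH Cons.prems have "(row_insert x r = (r@[x], None) \<and> (\<forall>z\<in>set r. z < x)) \<or>
      (\<exists>R1 y R2. r = R1@y#R2 \<and> (\<forall>z\<in>set R1. z<x) \<and> x < y \<and> row_insert x r = (R1@x#R2, Some y))"
      by auto
    then show ?thesis
    proof
      assume "row_insert x r = (r@[x], None) \<and> (\<forall>z\<in>set r. z < x)"
      then show ?thesis using False \<open>a < x\<close> by auto
    next
      assume "\<exists>R1 y R2. r = R1@y#R2 \<and> (\<forall>z\<in>set R1. z<x) \<and> x < y \<and> row_insert x r = (R1@x#R2, Some y)"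
      then obtain R1 y R2 where "r = R1@y#R2" "\<forall>z\<in>set R1. z<x" "x < y" "row_insert x r = (R1@x#R2, Some y)"
        by blast
      then show ?thesis using False \<open>a < x\<close> by (intro disjI2 exI[of _ "a#R1"]) auto
    qed
  qed
qed


lemma row_keq:
  assumes "sorted_wrt (<) r" "x \<notin> set r" "row_insert x r = (r', Some y)"
  shows "keq (r@[x]) (y#r')"
proof -
  from row_insert_char[OF assms(1,2)] assms(3) obtain R1 R2 where
    r: "r = R1@y#R2" and R1: "\<forall>z\<in>set R1. z<x" and xy: "x < y" and r': "r' = R1@x#R2"
    by auto
  have s1: "sorted_wrt (<) (y#R2)" "sorted_wrt (<) R1" using assms(1) r by (auto simp: sorted_wrt_append)
  have "keq (R1@(y#R2@[x]@[])@[]) (R1@(y#x#R2@[])@[])"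
    using keq_ctx[OF moveleft[OF s1(1) xy, of "[]"]] by blast
  then have a: "keq (r@[x]) (R1@[y,x]@R2)" using r by simp
  have b: "keq (R1@[y,x]@R2) (y#R1@[x]@R2)" using moveright[OF s1(2) R1 xy] by blast
  show ?thesis using keq_trans[OF a b] r' by simp
qed

definition reading :: "nat list list \<Rightarrow> nat list" where
  "reading T = concat (rev T)"

lemma reading_Cons[simp]: "reading (r#rs) = reading rs @ r"
  by (simp add: reading_def)

lemma reading_Nil[simp]: "reading [] = []"
  by (simp add: reading_def)

lemma row_insert_props:
  assumes "sorted_wrt (<) r" "x \<notin> set r" "row_insert x r = (r', b)"
  shows "sorted_wrt (<) r' \<and> (case b of None \<Rightarrow> set r' = insert x (set r)
      | Some y \<Rightarrow> y \<in> set r \<and> x < y \<and> insert y (set r') = insert x (set r) \<and> y \<notin> set r')"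
proof -
  from row_insert_char[OF assms(1,2)] show ?thesis
  proof
    assume "row_insert x r = (r@[x], None) \<and> (\<forall>z\<in>set r. z < x)"
    then show ?thesis using assms by (auto simp: sorted_wrt_append)
  next
    assume "\<exists>R1 y R2. r = R1@y#R2 \<and> (\<forall>z\<in>set R1. z<x) \<and> x < y \<and> row_insert x r = (R1@x#R2, Some y)"
    then obtain R1 y R2 where h: "r = R1@y#R2" "\<forall>z\<in>set R1. z<x" "x < y" "row_insert x r = (R1@x#R2, Some y)"
      by blast
    then have "r' = R1@x#R2" "b = Some y" using assms(3) by auto
    moreover have "sorted_wrt (<) (R1@x#R2)" using assms(1) h by (auto simp: sorted_wrt_append)
    moreover have "y \<notin> set (R1@x#R2)" using assms(1) h by (auto simp: sorted_wrt_append)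
    ultimately show ?thesis using h by auto
  qed
qed

lemma tab_insert_props:
  assumes "\<forall>r\<in>set T. sorted_wrt (<) r" "x \<notin> set (concat T)" "distinct (concat T)"
  shows "(\<forall>r\<in>set (tab_insert x T). sorted_wrt (<) r) \<and> set (concat (tab_insert x T)) = insert x (set (concat T))
     \<and> distinct (concat (tab_insert x T)) \<and> keq (reading T @ [x]) (reading (tab_insert x T))"
  using assms
proof (induction T arbitrary: x)
  case Nil then show ?case by simp
next
  case (Cons r rs)
  obtain r' b where rb: "row_insert x r = (r', b)" by fastforce
  have sr: "sorted_wrt (<) r" "x \<notin> set r" using Cons.prems by auto
  note P = row_insert_props[OF sr rb]
  show ?case
  proof (cases b)
    case None
    then have "tab_insert x (r#rs) = r'#rs" using rb by simp
    moreover have "r' = r@[x]" using row_insert_char[OF sr] rb None by auto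
    ultimately show ?thesis using P None Cons.prems by auto
  next
    case (Some y)
    then have ti: "tab_insert x (r#rs) = r' # tab_insert y rs" using rb by simp
    have yr: "y \<in> set r" "y \<notin> set r'" "insert y (set r') = insert x (set r)" using P Some by auto
    have yrs: "y \<notin> set (concat rs)" using Cons.prems(3) yr(1) by auto
    note IH = Cons.IH[OF _ yrs]
    have IH': "(\<forall>r\<in>set (tab_insert y rs). sorted_wrt (<) r) \<and> set (concat (tab_insert y rs)) = insert y (set (concat rs))
     \<and> distinct (concat (tab_insert y rs)) \<and> keq (reading rs @ [y]) (reading (tab_insert y rs))"
      using IH Cons.prems by auto
    have k1: "keq (reading rs @ r @ [x]) ((reading rs @ [y]) @ r')"
      using keq_ctx[OF row_keq[OF sr rb[unfolded Some]], of "reading rs" "[]"] by simp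
    have k2: "keq ((reading rs @ [y]) @ r') (reading (tab_insert y rs) @ r')"
      using keq_ctx[of "reading rs @ [y]" "reading (tab_insert y rs)" "[]" r'] IH' by simp
    have k: "keq (reading (r#rs) @ [x]) (reading (tab_insert x (r#rs)))"
      using keq_trans[OF k1 k2] ti by simp
    have dr': "distinct r'" using P by (simp add: sorted_wrt_iff_nth_less distinct_conv_nth)
        (metis nat_neq_iff order_less_irrefl)
    have sub: "set r' \<subseteq> insert x (set r)" using yr(3) by blast
    have "set r \<inter> set (concat rs) = {}" "x \<notin> set (concat rs)" using Cons.prems(2,3) by auto
    then have "set r' \<inter> set (concat (tab_insert y rs)) = {}"
      using IH' yr(2) sub by auto
    then show ?thesis using ti IH' P k yr Cons.prems dr' by auto
  qed
qed

lemma rskP_props: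
  assumes "distinct w"
  shows "(\<forall>r\<in>set (rsk_P w). sorted_wrt (<) r) \<and> distinct (concat (rsk_P w)) \<and>
    set (concat (rsk_P w)) = set w \<and> keq w (reading (rsk_P w))"
  using assms
proof (induction w rule: rev_induct)
  case Nil then show ?case by (simp add: rsk_P_def)
next
  case (snoc x w)
  have e: "rsk_P (w@[x]) = tab_insert x (rsk_P w)" by (simp add: rsk_P_def)
  have IH: "(\<forall>r\<in>set (rsk_P w). sorted_wrt (<) r) \<and> distinct (concat (rsk_P w)) \<and>
    set (concat (rsk_P w)) = set w \<and> keq w (reading (rsk_P w))" using snoc by auto
  have xn: "x \<notin> set (concat (rsk_P w))" using IH snoc.prems by auto
  note T = tab_insert_props[OF _ xn] 
  have k: "keq ([] @ w @ [x]) ([] @ reading (rsk_P w) @ [x])" using keq_ctx IH by blast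
  show ?case using T IH e keq_trans[OF _ ] k by (auto intro: keq_trans)
qed



lemma row_insert_nth:
  assumes "sorted_wrt (<) r" "x \<notin> set r"
  shows "(row_insert x r = (r@[x], None) \<and> (\<forall>z\<in>set r. z < x)) \<or>
    (\<exists>i<length r. row_insert x r = (r[i:=x], Some (r!i)) \<and> x < r!i \<and> (\<forall>j<i. r!j < x))"
proof -
  from row_insert_char[OF assms] show ?thesis
  proof
    assume "\<exists>R1 y R2. r = R1@y#R2 \<and> (\<forall>z\<in>set R1. z<x) \<and> x < y \<and> row_insert x r = (R1@x#R2, Some y)"
    then obtain R1 y R2 where h: "r = R1@y#R2" "\<forall>z\<in>set R1. z<x" "x < y" "row_insert x r = (R1@x#R2, Some y)"
      by blast
    have "r[length R1 := x] = R1@x#R2" "r!length R1 = y" using h(1) by (auto simp: list_update_append)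
    moreover have "\<forall>j<length R1. r!j < x" using h(1,2) by (auto simp: nth_append)
    ultimately show ?thesis using h by (intro disjI2 exI[of _ "length R1"]) auto
  qed simp
qed

definition colrel :: "nat list \<Rightarrow> nat list \<Rightarrow> bool" where
  "colrel r1 r2 \<longleftrightarrow> length r2 \<le> length r1 \<and> (\<forall>j<length r2. r1!j < r2!j)"

fun tabl :: "nat list list \<Rightarrow> bool" where
  "tabl [] = True"
| "tabl [r] = (r \<noteq> [] \<and> sorted_wrt (<) r)"
| "tabl (r1#r2#rs) = (r1 \<noteq> [] \<and> sorted_wrt (<) r1 \<and> colrel r1 r2 \<and> tabl (r2#rs))"

lemma colrel_bump:
  assumes s0: "sorted_wrt (<) r0" and i: "i < length r0" and xi: "x < r0!i" and xj: "\<forall>j<i. r0!j < x"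
    and cr: "colrel r0 r1" and s1: "sorted_wrt (<) r1" and yn: "r0!i \<notin> set r1"
  shows "colrel (r0[i:=x]) (fst (row_insert (r0!i) r1))"
proof -
  let ?y = "r0!i"
  have s0n: "\<And>a b. a < b \<Longrightarrow> b < length r0 \<Longrightarrow> r0!a < r0!b" using s0 by (simp add: sorted_wrt_iff_nth_less)
  have s1n: "\<And>a b. a < b \<Longrightarrow> b < length r1 \<Longrightarrow> r1!a < r1!b" using s1 by (simp add: sorted_wrt_iff_nth_less)
  have crl: "length r1 \<le> length r0" and crn: "\<And>j. j < length r1 \<Longrightarrow> r0!j < r1!j" using cr by (auto simp: colrel_def)
  have below: "r0[i:=x]!j < ?y" if "j \<le> i" for j
  proof (cases "j = i")
    case True then show ?thesis using i xi by simp
  next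
    case False then show ?thesis using that s0n[of j i] i by simp
  qed
  from row_insert_nth[OF s1 yn] show ?thesis
  proof
    assume h: "row_insert ?y r1 = (r1@[?y], None) \<and> (\<forall>z\<in>set r1. z < ?y)"
    have "length r1 \<le> i"
    proof (rule ccontr)
      assume "\<not> length r1 \<le> i"
      then have "r0!i < r1!i" using crn by auto
      moreover have "r1!i < ?y" using h \<open>\<not> length r1 \<le> i\<close> by auto
      ultimately show False by simp
    qed
    show ?thesis unfolding colrel_def
    proof (intro conjI allI impI)
      show "length (fst (row_insert ?y r1)) \<le> length (r0[i := x])" using h \<open>length r1 \<le> i\<close> i by simp
      fix j assume "j < length (fst (row_insert ?y r1))"
      then have j: "j \<le> length r1" using h by simp
      show "r0[i := x] ! j < fst (row_insert ?y r1) ! j"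
      proof (cases "j = length r1")
        case True then show ?thesis using h below \<open>length r1 \<le> i\<close> by (simp add: nth_append)
      next
        case False
        then have "j < length r1" "j \<noteq> i" using j \<open>length r1 \<le> i\<close> by auto
        then show ?thesis using h crn by (simp add: nth_append)
      qed
    qed
  next
    assume "\<exists>i'<length r1. row_insert ?y r1 = (r1[i':=?y], Some (r1!i')) \<and> ?y < r1!i' \<and> (\<forall>j<i'. r1!j < ?y)"
    then obtain i' where h: "i' < length r1" "row_insert ?y r1 = (r1[i':=?y], Some (r1!i'))"
      "?y < r1!i'" "\<forall>j<i'. r1!j < ?y" by blast
    have "i' \<le> i"
    proof (rule ccontr)
      assume "\<not> i' \<le> i"
      then have "r1!i < ?y" "r0!i < r1!i" using h crn[of i] by auto
      then show False by simp
    qed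
    show ?thesis unfolding colrel_def
    proof (intro conjI allI impI)
      show "length (fst (row_insert ?y r1)) \<le> length (r0[i := x])" using h crl by simp
      fix j assume "j < length (fst (row_insert ?y r1))"
      then have j: "j < length r1" using h by simp
      show "r0[i := x] ! j < fst (row_insert ?y r1) ! j"
      proof (cases "j = i'")
        case True then show ?thesis using h below \<open>i' \<le> i\<close> by simp
      next
        case False
        show ?thesis
        proof (cases "j = i")
          case True
          then show ?thesis using h False xi crn[of i] j i by simp
        next
          case False
          then show ?thesis using h \<open>j \<noteq> i'\<close> crn[of j] j by simp
        qed
      qed
    qed
  qed
qed

lemma tabl_Cons: "tabl (r#rs) \<Longrightarrow> tabl rs"
  by (cases rs) auto

lemma tabl_rows: "tabl T \<Longrightarrow> r \<in> set T \<Longrightarrow> sorted_wrt (<) r \<and> r \<noteq> []"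
  by (induction T rule: tabl.induct) auto

lemma tab_insert_Cons: "\<exists>ts. tab_insert y (r#rs) = fst (row_insert y r) # ts \<and>
   (snd (row_insert y r) = None \<longrightarrow> ts = rs) \<and> (\<forall>z. snd (row_insert y r) = Some z \<longrightarrow> ts = tab_insert z rs)"
  by (cases "row_insert y r") (auto split: option.splits)

lemma tabl_insert:
  assumes "tabl T" "x \<notin> set (concat T)" "distinct (concat T)"
  shows "tabl (tab_insert x T)"
  using assms
proof (induction T arbitrary: x)
  case Nil then show ?case by simp
next
  case (Cons r rs)
  have sr: "sorted_wrt (<) r" "r \<noteq> []" using tabl_rows[OF Cons.prems(1)] by auto
  have xr: "x \<notin> set r" using Cons.prems by auto
  from row_insert_nth[OF sr(1) xr] show ?case
  proof
    assume h: "row_insert x r = (r@[x], None) \<and> (\<forall>z\<in>set r. z < x)"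
    then have ti: "tab_insert x (r#rs) = (r@[x]) # rs" by simp
    have sx: "sorted_wrt (<) (r@[x])" using sr h by (auto simp: sorted_wrt_append)
    show ?thesis
    proof (cases rs)
      case Nil then show ?thesis using ti sx by simp
    next
      case (Cons r2 rs2)
      then have "colrel r r2" "tabl (r2#rs2)" using Cons.prems(1) by auto
      then have "colrel (r@[x]) r2" by (auto simp: colrel_def nth_append)
      then show ?thesis using ti sx Cons \<open>tabl (r2#rs2)\<close> by simp
    qed
  next
    assume "\<exists>i<length r. row_insert x r = (r[i:=x], Some (r!i)) \<and> x < r!i \<and> (\<forall>j<i. r!j < x)"
    then obtain i where h: "i < length r" "row_insert x r = (r[i:=x], Some (r!i))" "x < r!i" "\<forall>j<i. r!j < x"
      by blast
    let ?y = "r!i"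
    have ti: "tab_insert x (r#rs) = r[i:=x] # tab_insert ?y rs" using h by simp
    have sx: "sorted_wrt (<) (r[i:=x])" using row_insert_props[OF sr(1) xr h(2)] by simp
    have yrs: "?y \<notin> set (concat rs)" using Cons.prems(3) h(1) by (auto dest: nth_mem)
    have IH: "tabl (tab_insert ?y rs)" using Cons.IH[OF tabl_Cons[OF Cons.prems(1)] yrs] Cons.prems(3) by simp
    show ?thesis
    proof (cases rs)
      case Nil
      have "colrel (r[i:=x]) [?y]"
      proof -
        have "r[i:=x]!0 < ?y"
        proof (cases "i = 0")
          case True then show ?thesis using h by simp
        next
          case False then show ?thesis using h sr(1) by (simp add: sorted_wrt_iff_nth_less)
        qed
        then show ?thesis using h by (auto simp: colrel_def)
      qed
      then show ?thesis using ti sx Nil h sr by simp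
    next
      case (Cons r2 rs2)
      have cr: "colrel r r2" and t2: "tabl (r2#rs2)" using Cons.prems(1) Cons by auto
      have s2: "sorted_wrt (<) r2" using tabl_rows[OF t2] by auto
      have yr2: "?y \<notin> set r2" using yrs Cons by auto
      have c: "colrel (r[i:=x]) (fst (row_insert ?y r2))"
        by (rule colrel_bump[OF sr(1) h(1) h(3) h(4) cr s2 yr2])
      obtain ts where ts: "tab_insert ?y (r2#rs2) = fst (row_insert ?y r2) # ts" using tab_insert_Cons by blast
      have "r[i:=x] \<noteq> []" using sr by simp
      then show ?thesis using ti sx c ts IH Cons by simp
    qed
  qed
qed

lemma rskP_tabl: "distinct w \<Longrightarrow> tabl (rsk_P w)"
proof (induction w rule: rev_induct)
  case Nil then show ?case by (simp add: rsk_P_def)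
next
  case (snoc x w)
  have e: "rsk_P (w@[x]) = tab_insert x (rsk_P w)" by (simp add: rsk_P_def)
  have "distinct w" "x \<notin> set w" using snoc.prems by auto
  then show ?case using e tabl_insert[of "rsk_P w" x] snoc.IH rskP_props[of w] by auto
qed


lemma colrel_trans: "colrel a b \<Longrightarrow> colrel b c \<Longrightarrow> colrel a c"
  unfolding colrel_def by (meson dual_order.strict_trans le_trans less_le_trans)

lemma tabl_nth: "tabl T \<Longrightarrow> Suc i < length T \<Longrightarrow> colrel (T!i) (T!Suc i)"
proof (induction T arbitrary: i rule: tabl.induct)
  case (3 r1 r2 rs)
  then show ?case by (cases i) auto
qed auto

lemma tabl_col: "tabl T \<Longrightarrow> i < i' \<Longrightarrow> i' < length T \<Longrightarrow> colrel (T!i) (T!i')"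
proof (induction i' arbitrary: i)
  case 0 then show ?case by simp
next
  case (Suc i')
  show ?case
  proof (cases "i = i'")
    case True then show ?thesis using tabl_nth Suc.prems by simp
  next
    case False
    then have "colrel (T!i) (T!i')" using Suc by auto
    then show ?thesis using tabl_nth[of T i'] Suc.prems colrel_trans by blast
  qed
qed

lemma before_nth: "j < j' \<Longrightarrow> j' < length w \<Longrightarrow> before w (w!j) (w!j')"
proof (induction w arbitrary: j j')
  case Nil then show ?case by simp
next
  case (Cons a w)
  show ?case
  proof (cases j)
    case 0
    then obtain j'' where "j' = Suc j''" using Cons.prems by (cases j') auto
    then show ?thesis using 0 Cons.prems by auto
  next
    case (Suc jj)
    then obtain j'' where "j' = Suc j''" using Cons.prems by (cases j') auto
    then show ?thesis using Suc Cons by auto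
  qed
qed

lemma before_rev: "before (rev w) x y \<longleftrightarrow> before w y x"
  by (induction w) auto

lemma concat_split: "i < length T \<Longrightarrow> concat T = concat (take i T) @ T!i @ concat (drop (Suc i) T)"
proof -
  assume h: "i < length T"
  have "concat (take i T @ T!i # drop (Suc i) T) = concat (take i T) @ T!i @ concat (drop (Suc i) T)" by simp
  then show ?thesis using id_take_nth_drop[OF h] by simp
qed

lemma reading_split: "i < length T \<Longrightarrow> reading T = concat (rev (drop (Suc i) T)) @ T!i @ concat (rev (take i T))"
proof -
  assume h: "i < length T"
  have "concat (rev (take i T @ T!i # drop (Suc i) T)) = concat (rev (drop (Suc i) T)) @ T!i @ concat (rev (take i T))" by simp
  then show ?thesis using id_take_nth_drop[OF h] unfolding reading_def by simp
qed

lemma reading_R: "i < length T \<Longrightarrow> j < j' \<Longrightarrow> j' < length (T!i) \<Longrightarrow> before (reading T) (T!i!j) (T!i!j')"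
  using reading_split[of i T] before_nth[of j j' "T!i"] by simp

lemma reading_C: "i < i' \<Longrightarrow> i' < length T \<Longrightarrow> j < length (T!i') \<Longrightarrow> j < length (T!i) \<Longrightarrow>
   before (reading T) (T!i'!j) (T!i!j)"
proof -
  assume h: "i < i'" "i' < length T" "j < length (T!i')" "j < length (T!i)"
  have "drop (Suc i) T ! (i' - Suc i) = T!i'" using h by simp
  moreover have "i' - Suc i < length (drop (Suc i) T)" using h by simp
  ultimately have "T!i' \<in> set (drop (Suc i) T)" by (metis nth_mem)
  moreover have "T!i'!j \<in> set (T!i')" using h by simp
  ultimately have "T!i'!j \<in> set (concat (rev (drop (Suc i) T)))" by (simp only: set_concat set_rev) blast
  moreover have "T!i!j \<in> set (T!i)" using h by simp
  ultimately show ?thesis using reading_split[of i T] h by simp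
qed

definition cells :: "nat list list \<Rightarrow> (nat \<times> nat) set" where
  "cells T = {(i,j). i < length T \<and> j < length (T!i)}"

definition ent :: "nat list list \<Rightarrow> nat \<times> nat \<Rightarrow> nat" where
  "ent T c = T!(fst c)!(snd c)"

lemma distinct_rows:
  assumes "distinct (concat T)" "i < i'" "i' < length T"
  shows "set (T!i) \<inter> set (T!i') = {}"
proof -
  have "concat T = concat (take i' T) @ T!i' @ concat (drop (Suc i') T)"
    using concat_split assms by blast
  then have "set (concat (take i' T)) \<inter> set (T!i') = {}" using assms(1) by (simp add: distinct_append) blast
  moreover have "take i' T ! i = T!i" "i < length (take i' T)" using assms by auto
  then have "T!i \<in> set (take i' T)" by (metis nth_mem)
  ultimately show ?thesis by auto
qed

lemma distinct_row: "distinct (concat T) \<Longrightarrow> i < length T \<Longrightarrow> distinct (T!i)"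
  by (simp add: distinct_concat_iff)

lemma ent_inj: "distinct (concat T) \<Longrightarrow> inj_on (ent T) (cells T)"
proof (rule inj_onI)
  fix c c' assume d: "distinct (concat T)" and c: "c \<in> cells T" "c' \<in> cells T" and e: "ent T c = ent T c'"
  obtain i j i' j' where cc: "c = (i,j)" "c' = (i',j')" by fastforce
  have ij: "i < length T" "j < length (T!i)" "i' < length T" "j' < length (T!i')" using c cc by (auto simp: cells_def)
  have ii: "i = i'"
  proof (rule ccontr)
    assume "i \<noteq> i'"
    then have "set (T!i) \<inter> set (T!i') = {}" using distinct_rows[OF d] ij by (metis Int_commute nat_neq_iff)
    moreover have "T!i!j \<in> set (T!i)" "T!i'!j' \<in> set (T!i')" using ij by simp_all
    ultimately show False using e cc by (auto simp: ent_def)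
  qed
  have "distinct (T!i)" using distinct_row[OF d] ij by simp
  then have "j = j'" using e ii cc ij by (simp add: ent_def nth_eq_iff_index_eq)
  then show "c = c'" using ii cc by simp
qed

lemma ent_image: "ent T ` cells T = set (concat T)"
proof
  show "ent T ` cells T \<subseteq> set (concat T)"
  proof
    fix z assume "z \<in> ent T ` cells T"
    then obtain i j where "i < length T" "j < length (T!i)" "z = T!i!j" by (auto simp: ent_def cells_def)
    then have "T!i \<in> set T" "z \<in> set (T!i)" by simp_all
    then show "z \<in> set (concat T)" by (simp only: set_concat) blast
  qed
  show "set (concat T) \<subseteq> ent T ` cells T"
  proof
    fix z assume "z \<in> set (concat T)"
    then obtain r where "r \<in> set T" "z \<in> set r" by auto
    then obtain i j where "i < length T" "T!i = r" "j < length r" "r!j = z" by (metis in_set_conv_nth)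
    then show "z \<in> ent T ` cells T" unfolding cells_def ent_def by (intro image_eqI[of _ _ "(i,j)"]) auto
  qed
qed

lemma cells_finite: "finite (cells T)"
proof -
  have "cells T \<subseteq> {..<length T} \<times> {..<length (concat T)}"
  proof
    fix c assume "c \<in> cells T"
    then obtain i j where c: "c = (i,j)" "i < length T" "j < length (T!i)" by (auto simp: cells_def)
    have "length (concat T) = length (concat (take i T)) + length (T!i) + length (concat (drop (Suc i) T))"
      using concat_split[of i T] c by (metis length_append add.assoc)
  then have "length (T!i) \<le> length (concat T)" by linarith
    then show "c \<in> {..<length T} \<times> {..<length (concat T)}" using c by auto
  qed
  then show ?thesis by (rule finite_subset) auto
qed

lemma cells_snd_bound: "c \<in> cells T \<Longrightarrow> snd c < length (concat T)"
proof -
  assume "c \<in> cells T"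
  then obtain i j where c: "c = (i,j)" "i < length T" "j < length (T!i)" by (auto simp: cells_def)
  have "length (concat T) = length (concat (take i T)) + length (T!i) + length (concat (drop (Suc i) T))"
    using concat_split[of i T] c by (metis length_append add.assoc)
  then have "length (T!i) \<le> length (concat T)" by linarith
  then show ?thesis using c by simp
qed



definition cellsk :: "nat list list \<Rightarrow> nat \<Rightarrow> (nat \<times> nat) set" where
  "cellsk T k = {c\<in>cells T. fst c < k}"
definition cellsd :: "nat list list \<Rightarrow> nat \<Rightarrow> (nat \<times> nat) set" where
  "cellsd T k = {c\<in>cells T. snd c < k}"

lemma down_closed_nat:
  assumes "finite H" "\<And>i i'. i \<in> H \<Longrightarrow> i' < i \<Longrightarrow> i' \<in> H"
  shows "H = {..<card H}"
proof -
  have sub: "H \<subseteq> {..<card H}"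
  proof
    fix x assume "x \<in> H"
    then have "{..x} \<subseteq> H" using assms(2) by (auto simp: le_less)
    then have "card {..x} \<le> card H" using assms(1) by (rule card_mono[rotated])
    then show "x \<in> {..<card H}" by simp
  qed
  then show ?thesis using card_subset_eq[OF _ sub] by simp
qed

lemma reading_set: "set (reading T) = set (concat T)"
  by (auto simp: reading_def)

lemma reading_distinct: "distinct (concat T) \<Longrightarrow> distinct (reading T)"
proof (induction T)
  case Nil then show ?case by simp
next
  case (Cons r rs)
  then show ?case by (auto simp: reading_set)
qed

lemma tabl_F1: "tabl T \<Longrightarrow> i < length T \<Longrightarrow> j < j' \<Longrightarrow> j' < length (T!i) \<Longrightarrow> T!i!j < T!i!j'"
  using tabl_rows[of T "T!i"] by (auto simp: sorted_wrt_iff_nth_less)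

lemma tabl_F2: "tabl T \<Longrightarrow> i < i' \<Longrightarrow> i' < length T \<Longrightarrow> j < length (T!i') \<Longrightarrow> T!i!j < T!i'!j \<and> length (T!i') \<le> length (T!i)"
  using tabl_col[of T i i'] by (auto simp: colrel_def)

lemma inv_ent: "distinct (concat T) \<Longrightarrow> c \<in> cells T \<Longrightarrow> inv_into (cells T) (ent T) (ent T c) = c"
  using ent_inj by (simp add: inv_into_f_f)

lemma cells_mem: "c \<in> cells T \<longleftrightarrow> fst c < length T \<and> snd c < length (T!fst c)"
  by (cases c) (auto simp: cells_def)

lemma ent_in_S: assumes "S \<subseteq> set (concat T)" shows "S = ent T ` {c\<in>cells T. ent T c \<in> S}"
  using assms ent_image[of T] by auto

lemma inc_lower:
  assumes t: "tabl T" and d: "distinct (concat T)"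
  shows "card (cellsk T k) \<le> inc (reading T) k"
proof -
  let ?S = "ent T ` cellsk T k"
  let ?col = "\<lambda>z. fst (inv_into (cells T) (ent T) z)"
  have sub: "cellsk T k \<subseteq> cells T" by (auto simp: cellsk_def)
  have "chainfam (reading T) k ?S"
  proof (rule chainfamI[where col="?col"])
    show "?S \<subseteq> set (reading T)" using sub ent_image[of T] reading_set[of T] by auto
    show "?col z < k" if "z \<in> ?S" for z using that inv_ent[OF d] sub by (auto simp: cellsk_def)
    fix z z' assume z: "z \<in> ?S" and z': "z' \<in> ?S" and zz: "z < z'" and cz: "?col z = ?col z'"
    obtain c c' where c: "c \<in> cellsk T k" "z = ent T c" and c': "c' \<in> cellsk T k" "z' = ent T c'" using z z' by auto
    obtain i j i' j' where cc: "c = (i,j)" "c' = (i',j')" by fastforce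
    have "inv_into (cells T) (ent T) z = c" "inv_into (cells T) (ent T) z' = c'" using inv_ent[OF d, of c] inv_ent[OF d, of c'] c c' sub by blast+
    then have ii: "i = i'" using cz cc by simp
    have ij: "i < length T" "j < length (T!i)" "j' < length (T!i)" using c c' cc ii sub by (auto simp: cells_def)
    have "j < j'"
    proof (rule ccontr)
      assume "\<not> j < j'"
      then have "j' < j \<or> j = j'" by auto
      then show False
      proof
        assume "j' < j" then have "z' < z" using tabl_F1[OF t ij(1)] ij c c' cc ii by (simp add: ent_def)
        then show False using zz by simp
      qed (use zz c c' cc ii in auto)
    qed
    then show "before (reading T) z z'" using reading_R[OF ij(1) _ ij(3)] c c' cc ii by (simp add: ent_def)
  qed
  moreover have "card ?S = card (cellsk T k)"
    using card_image[OF inj_on_subset[OF ent_inj[OF d] sub]] .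
  ultimately show ?thesis using inc_ge by metis
qed

lemma dec_lower:
  assumes t: "tabl T" and d: "distinct (concat T)"
  shows "card (cellsd T k) \<le> inc (rev (reading T)) k"
proof -
  let ?S = "ent T ` cellsd T k"
  let ?col = "\<lambda>z. snd (inv_into (cells T) (ent T) z)"
  have sub: "cellsd T k \<subseteq> cells T" by (auto simp: cellsd_def)
  have "chainfam (rev (reading T)) k ?S"
  proof (rule chainfamI[where col="?col"])
    show "?S \<subseteq> set (rev (reading T))" using sub ent_image[of T] reading_set[of T] by auto
    show "?col z < k" if "z \<in> ?S" for z using that inv_ent[OF d] sub by (auto simp: cellsd_def)
    fix z z' assume z: "z \<in> ?S" and z': "z' \<in> ?S" and zz: "z < z'" and cz: "?col z = ?col z'"
    obtain c c' where c: "c \<in> cellsd T k" "z = ent T c" and c': "c' \<in> cellsd T k" "z' = ent T c'" using z z' by auto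
    obtain i j i' j' where cc: "c = (i,j)" "c' = (i',j')" by fastforce
    have "inv_into (cells T) (ent T) z = c" "inv_into (cells T) (ent T) z' = c'" using inv_ent[OF d, of c] inv_ent[OF d, of c'] c c' sub by blast+
    then have jj: "j = j'" using cz cc by simp
    have ij: "i < length T" "j < length (T!i)" "i' < length T" "j < length (T!i')" using c c' cc jj sub by (auto simp: cells_def)
    have "i < i'"
    proof (rule ccontr)
      assume "\<not> i < i'"
      then have "i' < i \<or> i = i'" by auto
      then show False
      proof
        assume "i' < i" then have "z' < z" using tabl_F2[OF t _ ij(1)] ij c c' cc jj by (simp add: ent_def)
        then show False using zz by simp
      qed (use zz c c' cc jj in auto)
    qed
    then have "before (reading T) z' z" using reading_C[OF _ ij(3) ij(4) ij(2)] c c' cc jj by (simp add: ent_def)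
    then show "before (rev (reading T)) z z'" by (simp add: before_rev)
  qed
  moreover have "card ?S = card (cellsd T k)"
    using card_image[OF inj_on_subset[OF ent_inj[OF d] sub]] .
  ultimately show ?thesis using inc_ge by metis
qed


lemma card_slices:
  fixes f :: "'a \<Rightarrow> nat"
  assumes "finite A" "\<And>c. c \<in> A \<Longrightarrow> f c < N"
  shows "card A = (\<Sum>j<N. card {c\<in>A. f c = j})"
proof -
  have A: "A = (\<Union>j\<in>{..<N}. {c\<in>A. f c = j})"
  proof
    show "A \<subseteq> (\<Union>j\<in>{..<N}. {c\<in>A. f c = j})"
    proof
      fix c assume "c \<in> A"
      then show "c \<in> (\<Union>j\<in>{..<N}. {c\<in>A. f c = j})" using assms(2)[of c] by (intro UN_I[of "f c"]) auto
    qed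
  qed auto
  have "card (\<Union>j\<in>{..<N}. {c\<in>A. f c = j}) = (\<Sum>j<N. card {c\<in>A. f c = j})"
  proof (rule card_UN_disjoint)
    show "\<forall>i\<in>{..<N}. finite {c \<in> A. f c = i}" using assms(1) by simp
    show "\<forall>i\<in>{..<N}. \<forall>j\<in>{..<N}. i \<noteq> j \<longrightarrow> {c \<in> A. f c = i} \<inter> {c \<in> A. f c = j} = {}" by blast
  qed simp
  then show ?thesis using A by metis
qed

lemma card_le_min_k:
  assumes "finite A" "inj_on f A" "f ` A \<subseteq> {..<k}"
  shows "card A \<le> k"
  using card_inj_on_le[OF assms(2,3)] by simp

lemma inc_upper:
  assumes t: "tabl T" and d: "distinct (concat T)" and cf: "chainfam (reading T) k S"
  shows "card S \<le> card (cellsk T k)"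
proof -
  from cf obtain col where S: "S \<subseteq> set (reading T)" and c1: "\<And>x. x\<in>S \<Longrightarrow> col x < k"
    and P: "\<And>x y. x\<in>S \<Longrightarrow> y\<in>S \<Longrightarrow> x < y \<Longrightarrow> col x = col y \<Longrightarrow> before (reading T) x y"
    unfolding chainfam_def by blast
  have dr: "distinct (reading T)" using reading_distinct[OF d] .
  let ?C = "{c\<in>cells T. ent T c \<in> S}"
  have S': "S \<subseteq> set (concat T)" using S by (simp add: reading_set)
  have cardS: "card S = card ?C"
  proof -
    have e: "ent T ` ?C = S" by (rule sym[OF ent_in_S[OF S']])
    have "inj_on (ent T) ?C" by (rule inj_on_subset[OF ent_inj[OF d]]) auto
    then have "card (ent T ` ?C) = card ?C" by (rule card_image)
    then show ?thesis unfolding e .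
  qed
  define N where "N = length (concat T)"
  have finC: "finite ?C" using cells_finite[of T] by (rule finite_subset[rotated]) auto
  have fincells: "finite (cellsk T k)" using cells_finite[of T] by (rule finite_subset[rotated]) (auto simp: cellsk_def)
  have cC: "card ?C = (\<Sum>j<N. card {c\<in>?C. snd c = j})"
    by (rule card_slices[OF finC]) (use cells_snd_bound[of _ T] N_def in auto)
  have cK: "card (cellsk T k) = (\<Sum>j<N. card {c\<in>cellsk T k. snd c = j})"
    by (rule card_slices[OF fincells]) (use cells_snd_bound[of _ T] N_def in \<open>auto simp: cellsk_def\<close>)
  have slice: "card {c\<in>?C. snd c = j} \<le> card {c\<in>cellsk T k. snd c = j}" for j
  proof -
    let ?Cj = "{c\<in>?C. snd c = j}"
    define H where "H = {i. i < length T \<and> j < length (T!i)}"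
    have finH: "finite H" unfolding H_def by auto
    have Hd: "H = {..<card H}"
    proof (rule down_closed_nat[OF finH])
      fix i i' assume "i \<in> H" "i' < i"
      then show "i' \<in> H" using tabl_F2[OF t, of i' i j] unfolding H_def by auto
    qed
    have Kj: "{c\<in>cellsk T k. snd c = j} = (\<lambda>i. (i,j)) ` (H \<inter> {..<k})"
    proof
      show "{c\<in>cellsk T k. snd c = j} \<subseteq> (\<lambda>i. (i,j)) ` (H \<inter> {..<k})"
      proof
        fix c assume "c \<in> {c\<in>cellsk T k. snd c = j}"
        then obtain i where "c = (i,j)" "i \<in> H" "i < k" by (cases c) (auto simp: cellsk_def cells_def H_def)
        then show "c \<in> (\<lambda>i. (i,j)) ` (H \<inter> {..<k})" by blast
      qed
      show "(\<lambda>i. (i,j)) ` (H \<inter> {..<k}) \<subseteq> {c\<in>cellsk T k. snd c = j}"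
        by (auto simp: cellsk_def cells_def H_def)
    qed
    have cKj: "card {c\<in>cellsk T k. snd c = j} = min (card H) k"
    proof -
      have "card {c\<in>cellsk T k. snd c = j} = card (H \<inter> {..<k})" unfolding Kj
        by (rule card_image) (auto simp: inj_on_def)
      also have "H \<inter> {..<k} = {..<min (card H) k}"
      proof -
        obtain h where h: "H = {..<h}" "card H = h" using Hd by (metis card_lessThan)
        then show ?thesis by auto
      qed
      finally show ?thesis by simp
    qed
    have finCj: "finite ?Cj" using finC by (rule finite_subset[rotated]) auto
    have a: "card ?Cj \<le> card H"
    proof (rule card_inj_on_le[where f=fst])
      show "inj_on fst ?Cj" by (auto simp: inj_on_def)
      show "fst ` ?Cj \<subseteq> H" by (auto simp: H_def cells_def)
    qed (rule finH)
    have b: "card ?Cj \<le> k"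
    proof (rule card_le_min_k[OF finCj, where f="\<lambda>c. col (ent T c)"])
      show "(\<lambda>c. col (ent T c)) ` ?Cj \<subseteq> {..<k}" using c1 by auto
      have no: "False" if nc: "c \<in> ?Cj" "c' \<in> ?Cj" "col (ent T c) = col (ent T c')" "fst c < fst c'" for c c'
      proof -
        obtain i i' where cc: "c = (i,j)" "c' = (i',j)" using nc(1,2) by (cases c, cases c') auto
        have ij: "i < length T" "j < length (T!i)" "i' < length T" "j < length (T!i')" using nc(1,2) cc
          by (auto simp: cells_def)
        have lt: "ent T c < ent T c'" using tabl_F2[OF t, of i i' j] ij nc(4) cc by (simp add: ent_def)
        have "before (reading T) (ent T c) (ent T c')" using P[OF _ _ lt nc(3)] nc(1,2) by auto
        moreover have "before (reading T) (ent T c') (ent T c)"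
          using reading_C[of i i' T j] ij nc(4) cc by (simp add: ent_def)
        ultimately show False using before_asym[OF dr] by blast
      qed
      show "inj_on (\<lambda>c. col (ent T c)) ?Cj"
      proof (rule inj_onI)
        fix c c' assume h: "c \<in> ?Cj" "c' \<in> ?Cj" "col (ent T c) = col (ent T c')"
        have "\<not> fst c < fst c'" using no[OF h] by blast
        moreover have "\<not> fst c' < fst c" using no[OF h(2,1) h(3)[symmetric]] by blast
        ultimately have "fst c = fst c'" by simp
        moreover have "snd c = snd c'" using h by simp
        ultimately show "c = c'" by (simp add: prod_eq_iff)
      qed
    qed
    show ?thesis using a b cKj by simp
  qed
  have "card ?C \<le> card (cellsk T k)" unfolding cC cK by (rule sum_mono) (rule slice)
  then show ?thesis using cardS by simp
qed

lemma dec_upper: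
  assumes t: "tabl T" and d: "distinct (concat T)" and cf: "chainfam (rev (reading T)) k S"
  shows "card S \<le> card (cellsd T k)"
proof -
  from cf obtain col where S: "S \<subseteq> set (rev (reading T))" and c1: "\<And>x. x\<in>S \<Longrightarrow> col x < k"
    and P: "\<And>x y. x\<in>S \<Longrightarrow> y\<in>S \<Longrightarrow> x < y \<Longrightarrow> col x = col y \<Longrightarrow> before (rev (reading T)) x y"
    unfolding chainfam_def by blast
  have dr: "distinct (reading T)" using reading_distinct[OF d] .
  let ?C = "{c\<in>cells T. ent T c \<in> S}"
  have S': "S \<subseteq> set (concat T)" using S by (simp add: reading_set)
  have cardS: "card S = card ?C"
  proof -
    have e: "ent T ` ?C = S" by (rule sym[OF ent_in_S[OF S']])
    have "inj_on (ent T) ?C" by (rule inj_on_subset[OF ent_inj[OF d]]) auto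
    then have "card (ent T ` ?C) = card ?C" by (rule card_image)
    then show ?thesis unfolding e .
  qed
  define N where "N = length T"
  have finC: "finite ?C" using cells_finite[of T] by (rule finite_subset[rotated]) auto
  have fincells: "finite (cellsd T k)" using cells_finite[of T] by (rule finite_subset[rotated]) (auto simp: cellsd_def)
  have cC: "card ?C = (\<Sum>i<N. card {c\<in>?C. fst c = i})"
    by (rule card_slices[OF finC]) (auto simp: N_def cells_def)
  have cK: "card (cellsd T k) = (\<Sum>i<N. card {c\<in>cellsd T k. fst c = i})"
    by (rule card_slices[OF fincells]) (auto simp: N_def cellsd_def cells_def)
  have slice: "card {c\<in>?C. fst c = i} \<le> card {c\<in>cellsd T k. fst c = i}" if iN: "i < N" for i
  proof -
    let ?Ci = "{c\<in>?C. fst c = i}"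
    have Kj: "{c\<in>cellsd T k. fst c = i} = (\<lambda>j. (i,j)) ` {..<min (length (T!i)) k}"
      using iN by (auto simp: cellsd_def cells_def N_def)
    have cKj: "card {c\<in>cellsd T k. fst c = i} = min (length (T!i)) k" unfolding Kj
      by (subst card_image) (auto simp: inj_on_def)
    have finCj: "finite ?Ci" using finC by (rule finite_subset[rotated]) auto
    have a: "card ?Ci \<le> length (T!i)"
    proof -
      have "card ?Ci \<le> card {..<length (T!i)}"
      proof (rule card_inj_on_le[where f=snd])
        show "inj_on snd ?Ci" by (auto simp: inj_on_def)
        show "snd ` ?Ci \<subseteq> {..<length (T!i)}" by (auto simp: cells_def)
      qed simp
      then show ?thesis by simp
    qed
    have b: "card ?Ci \<le> k"
    proof (rule card_le_min_k[OF finCj, where f="\<lambda>c. col (ent T c)"])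
      show "(\<lambda>c. col (ent T c)) ` ?Ci \<subseteq> {..<k}" using c1 by auto
      have no: "False" if nc: "c \<in> ?Ci" "c' \<in> ?Ci" "col (ent T c) = col (ent T c')" "snd c < snd c'" for c c'
      proof -
        obtain j j' where cc: "c = (i,j)" "c' = (i,j')" using nc(1,2) by (cases c, cases c') auto
        have ij: "i < length T" "j < length (T!i)" "j' < length (T!i)" using nc(1,2) cc
          by (auto simp: cells_def)
        have lt: "ent T c < ent T c'" using tabl_F1[OF t, of i j j'] ij nc(4) cc by (simp add: ent_def)
        have "before (rev (reading T)) (ent T c) (ent T c')" using P[OF _ _ lt nc(3)] nc(1,2) by auto
        then have "before (reading T) (ent T c') (ent T c)" by (simp add: before_rev)
        moreover have "before (reading T) (ent T c) (ent T c')"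
          using reading_R[of i T j j'] ij nc(4) cc by (simp add: ent_def)
        ultimately show False using before_asym[OF dr] by blast
      qed
      show "inj_on (\<lambda>c. col (ent T c)) ?Ci"
      proof (rule inj_onI)
        fix c c' assume h: "c \<in> ?Ci" "c' \<in> ?Ci" "col (ent T c) = col (ent T c')"
        have "\<not> snd c < snd c'" using no[OF h] by blast
        moreover have "\<not> snd c' < snd c" using no[OF h(2,1) h(3)[symmetric]] by blast
        ultimately have "snd c = snd c'" by simp
        moreover have "fst c = fst c'" using h by simp
        ultimately show "c = c'" by (simp add: prod_eq_iff)
      qed
    qed
    show ?thesis using a b cKj by simp
  qed
  have "card ?C \<le> card (cellsd T k)" unfolding cC cK by (rule sum_mono) (rule slice, simp)
  then show ?thesis using cardS by simp
qed

lemma inc_reading: "tabl T \<Longrightarrow> distinct (concat T) \<Longrightarrow> inc (reading T) k = card (cellsk T k)"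
  using inc_lower[of T k] inc_upper[of T] inc_obtain[of "reading T" k] by (metis le_antisym)

lemma dec_reading: "tabl T \<Longrightarrow> distinct (concat T) \<Longrightarrow> inc (rev (reading T)) k = card (cellsd T k)"
  using dec_lower[of T k] dec_upper[of T] inc_obtain[of "rev (reading T)" k] by (metis le_antisym)



lemma card_cellsk: "card (cellsk T k) = (\<Sum>i<k. part (map length T) i)"
proof -
  have fin: "finite (cellsk T k)" using cells_finite[of T] by (rule finite_subset[rotated]) (auto simp: cellsk_def)
  have "card (cellsk T k) = (\<Sum>i<k. card {c\<in>cellsk T k. fst c = i})"
    by (rule card_slices[OF fin]) (auto simp: cellsk_def)
  also have "\<dots> = (\<Sum>i<k. part (map length T) i)"
  proof (rule sum.cong[OF refl])
    fix i assume "i \<in> {..<k}"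
    then have e: "{c\<in>cellsk T k. fst c = i} = (\<lambda>j. (i,j)) ` {..<part (map length T) i}"
    proof -
      assume ik: "i \<in> {..<k}"
      show ?thesis
      proof
        show "{c\<in>cellsk T k. fst c = i} \<subseteq> (\<lambda>j. (i,j)) ` {..<part (map length T) i}"
        proof
          fix c assume "c \<in> {c\<in>cellsk T k. fst c = i}"
          then obtain j where "c = (i,j)" "i < length T" "j < length (T!i)" by (cases c) (auto simp: cellsk_def cells_def)
          then show "c \<in> (\<lambda>j. (i,j)) ` {..<part (map length T) i}" by (auto simp: part_def)
        qed
        show "(\<lambda>j. (i,j)) ` {..<part (map length T) i} \<subseteq> {c\<in>cellsk T k. fst c = i}"
          using ik by (auto simp: cellsk_def cells_def part_def split: if_splits)
      qed
    qed
    show "card {c\<in>cellsk T k. fst c = i} = part (map length T) i"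
      unfolding e by (subst card_image) (auto simp: inj_on_def)
  qed
  finally show ?thesis .
qed

lemma card_cellsd: "card (cellsd T k) = (\<Sum>i<length T. min (length (T!i)) k)"
proof -
  have fin: "finite (cellsd T k)" using cells_finite[of T] by (rule finite_subset[rotated]) (auto simp: cellsd_def)
  have "card (cellsd T k) = (\<Sum>i<length T. card {c\<in>cellsd T k. fst c = i})"
    by (rule card_slices[OF fin]) (auto simp: cellsd_def cells_def)
  also have "\<dots> = (\<Sum>i<length T. min (length (T!i)) k)"
  proof (rule sum.cong[OF refl])
    fix i assume iN: "i \<in> {..<length T}"
    have e: "{c\<in>cellsd T k. fst c = i} = (\<lambda>j. (i,j)) ` {..<min (length (T!i)) k}"
    proof
      show "{c\<in>cellsd T k. fst c = i} \<subseteq> (\<lambda>j. (i,j)) ` {..<min (length (T!i)) k}"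
      proof
        fix c assume "c \<in> {c\<in>cellsd T k. fst c = i}"
        then obtain j where "c = (i,j)" "j < length (T!i)" "j < k" by (cases c) (auto simp: cellsd_def cells_def)
        then show "c \<in> (\<lambda>j. (i,j)) ` {..<min (length (T!i)) k}" by auto
      qed
      show "(\<lambda>j. (i,j)) ` {..<min (length (T!i)) k} \<subseteq> {c\<in>cellsd T k. fst c = i}"
        using iN by (auto simp: cellsd_def cells_def)
    qed
    show "card {c\<in>cellsd T k. fst c = i} = min (length (T!i)) k"
      unfolding e by (subst card_image) (auto simp: inj_on_def)
  qed
  finally show ?thesis .
qed

lemma tabl_length: "tabl T \<Longrightarrow> length T \<le> length (concat T)"
proof (induction T)
  case Nil then show ?case by simp
next
  case (Cons r rs)
  have "r \<noteq> []" using tabl_rows[OF Cons.prems] by auto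
  then show ?case using Cons tabl_Cons[OF Cons.prems] by (cases r) auto
qed

lemma inc_shape:
  assumes "distinct w"
  shows "inc w k = (\<Sum>i<k. part (rsk_shape w) i)"
proof -
  note P = rskP_props[OF assms]
  have "inc w k = inc (reading (rsk_P w)) k" using keq_inc P assms by blast
  also have "\<dots> = card (cellsk (rsk_P w) k)" using inc_reading rskP_tabl[OF assms] P by blast
  finally show ?thesis by (simp add: card_cellsk rsk_shape_def)
qed

lemma dec_shape:
  assumes "distinct w" "length w \<le> N"
  shows "inc (rev w) k = (\<Sum>i<N. min (part (rsk_shape w) i) k)"
proof -
  note P = rskP_props[OF assms(1)]
  let ?T = "rsk_P w"
  have "inc (rev w) k = inc (rev (reading ?T)) k" using keq_inc keq_rev P assms by (metis distinct_rev)
  also have "\<dots> = card (cellsd ?T k)" using dec_reading rskP_tabl[OF assms(1)] P by blast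
  also have "\<dots> = (\<Sum>i<length ?T. min (length (?T!i)) k)" by (rule card_cellsd)
  also have "\<dots> = (\<Sum>i<N. min (part (rsk_shape w) i) k)"
  proof -
    have lT: "length ?T \<le> N"
    proof -
      have "length (concat ?T) = length w" using P assms(1) by (metis distinct_card)
      then show ?thesis using tabl_length[OF rskP_tabl[OF assms(1)]] assms(2) by simp
    qed
    have "(\<Sum>i<N. min (part (rsk_shape w) i) k) = (\<Sum>i<length ?T. min (part (rsk_shape w) i) k) + (\<Sum>i\<in>{length ?T..<N}. min (part (rsk_shape w) i) k)"
      using lT by (metis atLeast0LessThan sum.atLeastLessThan_concat zero_le)
    also have "(\<Sum>i\<in>{length ?T..<N}. min (part (rsk_shape w) i) k) = 0"
      by (auto simp: part_def rsk_shape_def)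
    also have "(\<Sum>i<length ?T. min (part (rsk_shape w) i) k) = (\<Sum>i<length ?T. min (length (?T!i)) k)"
      by (rule sum.cong) (auto simp: part_def rsk_shape_def)
    finally show ?thesis by simp
  qed
  finally show ?thesis .
qed


lemma shape_props:
  assumes d: "distinct w" and n: "length w = n"
  shows "\<And>i. part (rsk_shape w) (Suc i) \<le> part (rsk_shape w) i"
    and "\<And>i. n \<le> i \<Longrightarrow> part (rsk_shape w) i = 0"
    and "(\<Sum>i<n. part (rsk_shape w) i) = n"
proof -
  let ?T = "rsk_P w"
  note P = rskP_props[OF d]
  have t: "tabl ?T" using rskP_tabl[OF d] .
  have lc: "length (concat ?T) = n" using P d n by (metis distinct_card)
  have lT: "length ?T \<le> n" using tabl_length[OF t] lc by simp
  show "part (rsk_shape w) (Suc i) \<le> part (rsk_shape w) i" for i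
  proof (cases "Suc i < length ?T")
    case True
    have "length (?T!Suc i) \<le> length (?T!i)" using tabl_col[OF t, of i "Suc i"] True by (simp add: colrel_def)
    then show ?thesis using True by (simp add: part_def rsk_shape_def)
  qed (simp add: part_def rsk_shape_def)
  show "n \<le> i \<Longrightarrow> part (rsk_shape w) i = 0" for i using lT by (simp add: part_def rsk_shape_def)
  have "cellsk ?T n = cells ?T" using lT by (auto simp: cellsk_def cells_def)
  then have "card (cellsk ?T n) = card (set (concat ?T))"
    using ent_image[of ?T] card_image[OF ent_inj[of ?T]] P by metis
  also have "\<dots> = n" using P lc by (metis distinct_card)
  finally show "(\<Sum>i<n. part (rsk_shape w) i) = n" by (simp add: card_cellsk rsk_shape_def)
qed

lemma adj_swap_inv[simp]: "adj_swap k (adj_swap k x) = x"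
  by (simp add: adj_swap_def)

lemma adj_swap_inj: "inj (adj_swap k)"
  by (metis adj_swap_inv injI)

lemma before_map: "inj f \<Longrightarrow> before (map f v) (f x) (f y) \<longleftrightarrow> before v x y"
  by (induction v) (auto simp: inj_eq)

lemma adj_swap_mono: "x < y \<Longrightarrow> \<not> (x = k \<and> y = Suc k) \<Longrightarrow> adj_swap k x < adj_swap k y"
  by (auto simp: adj_swap_def)

lemma swapA:
  assumes "before v k (Suc k)" "chainfam (map (adj_swap k) v) j S"
  shows "chainfam v j (adj_swap k ` S)"
proof -
  let ?s = "adj_swap k"
  from assms(2) obtain col where S: "S \<subseteq> set (map ?s v)" and c1: "\<And>x. x\<in>S \<Longrightarrow> col x < j"
    and P: "\<And>x y. x\<in>S \<Longrightarrow> y\<in>S \<Longrightarrow> x < y \<Longrightarrow> col x = col y \<Longrightarrow> before (map ?s v) x y"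
    unfolding chainfam_def by blast
  show ?thesis
  proof (rule chainfamI[where col="\<lambda>x. col (?s x)"])
    show "?s ` S \<subseteq> set v" using S by auto
    show "x \<in> ?s ` S \<Longrightarrow> col (?s x) < j" for x using c1 by auto
    fix x y assume x: "x \<in> ?s ` S" and y: "y \<in> ?s ` S" and xy: "x < y" and c: "col (?s x) = col (?s y)"
    show "before v x y"
    proof (cases "x = k \<and> y = Suc k")
      case True then show ?thesis using assms(1) by simp
    next
      case False
      then have "?s x < ?s y" using adj_swap_mono xy by blast
      moreover have "?s x \<in> S" "?s y \<in> S" using x y by auto
      ultimately have "before (map ?s v) (?s x) (?s y)" using P c by blast
      then show ?thesis using before_map[OF adj_swap_inj] by blast
    qed
  qed
qed

lemma swapB:
  assumes "chainfam v j S"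
  shows "chainfam (map (adj_swap k) v) j (adj_swap k ` (S - {k}))"
proof -
  let ?s = "adj_swap k"
  from assms obtain col where S: "S \<subseteq> set v" and c1: "\<And>x. x\<in>S \<Longrightarrow> col x < j"
    and P: "\<And>x y. x\<in>S \<Longrightarrow> y\<in>S \<Longrightarrow> x < y \<Longrightarrow> col x = col y \<Longrightarrow> before v x y"
    unfolding chainfam_def by blast
  show ?thesis
  proof (rule chainfamI[where col="\<lambda>x. col (?s x)"])
    show "?s ` (S - {k}) \<subseteq> set (map ?s v)" using S by auto
    show "x \<in> ?s ` (S - {k}) \<Longrightarrow> col (?s x) < j" for x using c1 by auto
    fix x y assume x: "x \<in> ?s ` (S - {k})" and y: "y \<in> ?s ` (S - {k})" and xy: "x < y" and c: "col (?s x) = col (?s y)"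
    have xs: "?s x \<in> S" "?s y \<in> S" "?s y \<noteq> k" using x y by auto
    have "\<not> (x = k \<and> y = Suc k)" using xs(3) by (auto simp: adj_swap_def)
    then have "?s x < ?s y" using adj_swap_mono xy by blast
    then have "before v (?s x) (?s y)" using P c xs by blast
    then have "before (map ?s v) (?s (?s x)) (?s (?s y))" using before_map[OF adj_swap_inj] by blast
    then show "before (map ?s v) x y" by simp
  qed
qed

lemma inc_swap:
  assumes "before v k (Suc k)"
  shows "inc (map (adj_swap k) v) j \<le> inc v j" and "inc v j \<le> inc (map (adj_swap k) v) j + 1"
proof -
  show "inc (map (adj_swap k) v) j \<le> inc v j"
  proof (rule inc_le_transfer)
    fix S assume h: "chainfam (map (adj_swap k) v) j S"
    have "card (adj_swap k ` S) = card S" using card_image[OF inj_on_subset[OF adj_swap_inj[of k]]] by blast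
    then show "\<exists>S'. chainfam v j S' \<and> card S \<le> card S'" using swapA[OF assms h] by (intro exI) auto
  qed
  obtain S where S: "chainfam v j S" "card S = inc v j" by (rule inc_obtain)
  have fin: "finite S" using S(1) by (auto simp: chainfam_def intro: finite_subset)
  have "card (adj_swap k ` (S - {k})) = card (S - {k})" using card_image[OF inj_on_subset[OF adj_swap_inj[of k]]] by blast
  also have "\<dots> \<ge> card S - 1" by (simp add: card_Diff_singleton_if)
  finally have "card S \<le> card (adj_swap k ` (S - {k})) + 1" by simp
  moreover have "card (adj_swap k ` (S - {k})) \<le> inc (map (adj_swap k) v) j" using inc_ge swapB[OF S(1)] by blast
  ultimately show "inc v j \<le> inc (map (adj_swap k) v) j + 1" using S(2) by simp
qed



lemma sumV_aux: "\<forall>V::nat set. finite V \<and> 0 \<notin> V \<and> card V = N \<longrightarrow> N * (N + 1) \<le> 2 * \<Sum>V"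
proof (induction N)
  case 0 then show ?case by simp
next
  case (Suc N)
  show ?case
  proof (intro allI impI)
    fix V :: "nat set" assume h: "finite V \<and> 0 \<notin> V \<and> card V = Suc N"
    then have fin: "finite V" and z: "0 \<notin> V" and cv: "card V = Suc N" by auto
    then have ne: "V \<noteq> {}" by auto
    define M where "M = Max V"
    have MV: "M \<in> V" using Max_in[OF fin ne] M_def by simp
    have cV: "card (V - {M}) = N" using cv MV fin by simp
    have IH: "N * (N + 1) \<le> 2 * \<Sum>(V - {M})" using Suc.IH fin z cV by auto
    have "V \<subseteq> {1..M}"
    proof
      fix x assume xV: "x \<in> V"
      have "x \<noteq> 0" using xV z by metis
      moreover have "x \<le> M" using Max_ge[OF fin xV] M_def by simp
      ultimately show "x \<in> {1..M}" by simp
    qed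
    then have "card V \<le> M" using card_mono[of "{1..M}" V] by simp
    have "\<Sum>V = M + \<Sum>(V - {M})" using sum.remove[OF fin MV] by simp
    then show "Suc N * (Suc N + 1) \<le> 2 * \<Sum>V" using IH \<open>card V \<le> M\<close> cv by (simp add: algebra_simps)
  qed
qed

lemma sumV: "finite V \<Longrightarrow> 0 \<notin> V \<Longrightarrow> card V * (card V + 1) \<le> 2 * \<Sum>(V::nat set)"
  using sumV_aux by blast

lemma dec_mono: "(\<And>i. f (Suc i) \<le> (f i :: nat)) \<Longrightarrow> l \<le> i \<Longrightarrow> f i \<le> f l"
  by (induction i) (auto simp: le_Suc_eq intro: le_trans)

lemma colcount_ge:
  assumes "\<And>i. f (Suc i) \<le> (f i :: nat)" "i < n" "c \<le> f i"
  shows "i + 1 \<le> card {l\<in>{..<n}. c \<le> f l}"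
proof -
  have "{..i} \<subseteq> {l\<in>{..<n}. c \<le> f l}" using assms dec_mono[of f] by (auto intro: le_trans)
  then show ?thesis using card_mono[of "{l\<in>{..<n}. c \<le> f l}" "{..i}"] by simp
qed

lemma colcount_le:
  assumes "\<And>i. f (Suc i) \<le> (f i :: nat)" "f i < c"
  shows "card {l\<in>{..<n}. c \<le> f l} \<le> i"
proof -
  have "{l\<in>{..<n}. c \<le> f l} \<subseteq> {..<i}"
  proof
    fix l assume "l \<in> {l\<in>{..<n}. c \<le> f l}"
    then have "c \<le> f l" by simp
    show "l \<in> {..<i}"
    proof (rule ccontr)
      assume "l \<notin> {..<i}"
      then have "f l \<le> f i" using dec_mono[of f i l] assms(1) by simp
      then show False using \<open>c \<le> f l\<close> assms(2) by simp
    qed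
  qed
  then show ?thesis using card_mono[of "{..<i}"] by fastforce
qed

lemma min_sum_Suc:
  fixes n :: nat shows "(\<Sum>i<n. min (f i) (Suc c)) = (\<Sum>i<n. min (f i) c) + card {l\<in>{..<n}. Suc c \<le> (f l :: nat)}"
proof -
  have "(\<Sum>i<n. min (f i) (Suc c)) = (\<Sum>i<n. min (f i) c + (if Suc c \<le> f i then 1 else 0))"
    by (rule sum.cong) auto
  also have "\<dots> = (\<Sum>i<n. min (f i) c) + (\<Sum>i<n. (if Suc c \<le> f i then 1 else 0))"
    by (simp add: sum.distrib)
  also have "(\<Sum>i<n. (if Suc c \<le> f i then 1 else 0)) = card {l\<in>{..<n}. Suc c \<le> f l}"
    using sum.inter_filter[OF finite_lessThan[of n], of "\<lambda>_. 1::nat" "\<lambda>l. Suc c \<le> f l"] by simp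
  finally show ?thesis .
qed

lemma comb:
  fixes a b :: "nat \<Rightarrow> nat" and n :: nat
  assumes da: "\<And>i. a (Suc i) \<le> a i" and db: "\<And>i. b (Suc i) \<le> b i"
    and za: "\<And>i. n \<le> i \<Longrightarrow> a i = 0" and zb: "\<And>i. n \<le> i \<Longrightarrow> b i = 0"
    and sa: "(\<Sum>i<n. a i) = n" and sb: "(\<Sum>i<n. b i) = n"
    and H4: "\<And>k. (\<Sum>i<k. b i) \<le> (\<Sum>i<k. a i) \<and> (\<Sum>i<k. a i) \<le> (\<Sum>i<k. b i) + 1"
    and H5: "\<And>c. (\<Sum>i<n. min (a i) c) \<le> (\<Sum>i<n. min (b i) c) \<and> (\<Sum>i<n. min (b i) c) \<le> (\<Sum>i<n. min (a i) c) + 1"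
  shows "(1/2) * (\<Sum>i<n. \<bar>real (a i) - real (b i)\<bar>) \<le> sqrt (real n / 2)"
proof -
  have d1: "a i \<le> b i + 1 \<and> b i \<le> a i + 1" for i
    using H4[of i] H4[of "Suc i"] by simp
  define \<alpha> where "\<alpha> c = card {l\<in>{..<n}. c \<le> a l}" for c
  define \<beta> where "\<beta> c = card {l\<in>{..<n}. c \<le> b l}" for c
  have d2: "\<alpha> (Suc c) \<le> \<beta> (Suc c) + 1 \<and> \<beta> (Suc c) \<le> \<alpha> (Suc c) + 1" for c
    using H5[of c] H5[of "Suc c"] min_sum_Suc[where f=a and n=n and c=c] min_sum_Suc[where f=b and n=n and c=c] unfolding \<alpha>_def \<beta>_def
    by linarith
  define P where "P = {i\<in>{..<n}. a i = Suc (b i)}"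
  define Q where "Q = {i\<in>{..<n}. b i = Suc (a i)}"
  have finP: "finite P" and finQ: "finite Q" by (auto simp: P_def Q_def)
  have PQ: "P \<inter> Q = {}" by (auto simp: P_def Q_def)
  have injP: "inj_on a P"
  proof -
    have no: False if t: "i \<in> P" "i' \<in> P" "a i = a i'" "i < i'" for i i'
    proof -
      obtain c where c: "a i = Suc c" using t(1) by (auto simp: P_def)
      have "i' + 1 \<le> \<alpha> (Suc c)" unfolding \<alpha>_def using colcount_ge[of a i' n "Suc c", OF da] t c by (auto simp: P_def)
      moreover have "\<beta> (Suc c) \<le> i" unfolding \<beta>_def using colcount_le[of b i "Suc c" n, OF db] t c by (auto simp: P_def)
      ultimately show False using d2[of c] t(4) by linarith
    qed
    show ?thesis by (rule inj_onI) (metis no nat_neq_iff)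
  qed
  have injQ: "inj_on b Q"
  proof -
    have no: False if t: "i \<in> Q" "i' \<in> Q" "b i = b i'" "i < i'" for i i'
    proof -
      obtain c where c: "b i = Suc c" using t(1) by (auto simp: Q_def)
      have "i' + 1 \<le> \<beta> (Suc c)" unfolding \<beta>_def using colcount_ge[of b i' n "Suc c", OF db] t c by (auto simp: Q_def)
      moreover have "\<alpha> (Suc c) \<le> i" unfolding \<alpha>_def using colcount_le[of a i "Suc c" n, OF da] t c by (auto simp: Q_def)
      ultimately show False using d2[of c] t(4) by linarith
    qed
    show ?thesis by (rule inj_onI) (metis no nat_neq_iff)
  qed
  have disj: "a ` P \<inter> b ` Q = {}"
  proof (rule ccontr)
    assume "a ` P \<inter> b ` Q \<noteq> {}"
    then obtain i i' where ii: "i \<in> P" "i' \<in> Q" "a i = b i'" by blast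
    obtain c where c: "a i = Suc c" using ii(1) by (auto simp: P_def)
    have "i + 1 \<le> \<alpha> (Suc c)" unfolding \<alpha>_def using colcount_ge[of a i n "Suc c", OF da] ii c by (auto simp: P_def)
    moreover have "\<beta> (Suc c) \<le> i" unfolding \<beta>_def using colcount_le[of b i "Suc c" n, OF db] ii c by (auto simp: P_def)
    moreover have "i' + 1 \<le> \<beta> (Suc c)" unfolding \<beta>_def using colcount_ge[of b i' n "Suc c", OF db] ii c by (auto simp: Q_def)
    moreover have "\<alpha> (Suc c) \<le> i'" unfolding \<alpha>_def using colcount_le[of a i' "Suc c" n, OF da] ii c by (auto simp: Q_def)
    ultimately show False by linarith
  qed
  have ab: "int (a i) = int (b i) + (if i \<in> P then 1 else 0) - (if i \<in> Q then 1 else 0)" if "i < n" for i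
    using d1[of i] that by (auto simp: P_def Q_def)
  have "(\<Sum>i<n. int (a i)) = (\<Sum>i<n. int (b i) + (if i \<in> P then 1 else 0) - (if i \<in> Q then 1 else 0))"
    by (rule sum.cong) (auto simp: ab)
  also have "\<dots> = (\<Sum>i<n. int (b i)) + int (card P) - int (card Q)"
  proof -
    have "P \<subseteq> {..<n}" "Q \<subseteq> {..<n}" by (auto simp: P_def Q_def)
    then have "(\<Sum>i<n. (if i \<in> P then 1 else 0::int)) = int (card P)" "(\<Sum>i<n. (if i \<in> Q then 1 else 0::int)) = int (card Q)"
      by (simp_all add: sum.If_cases Int_absorb1 Int_absorb2 Int_commute)
    then show ?thesis by (simp add: sum.distrib sum_subtractf)
  qed
  finally have cPQ: "card P = card Q" using sa sb by (simp flip: of_nat_sum)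
  define m where "m = card P"
  have absum: "(\<Sum>i<n. \<bar>real (a i) - real (b i)\<bar>) = real (card P + card Q)"
  proof -
    have "(\<Sum>i<n. \<bar>real (a i) - real (b i)\<bar>) = (\<Sum>i<n. (if i \<in> P then 1 else 0) + (if i \<in> Q then 1 else 0))"
    proof (rule sum.cong[OF refl])
      fix i assume "i \<in> {..<n}"
      then show "\<bar>real (a i) - real (b i)\<bar> = (if i \<in> P then 1 else 0) + (if i \<in> Q then 1 else 0)"
        using d1[of i] by (auto simp: P_def Q_def)
    qed
    also have "\<dots> = real (card P) + real (card Q)"
    proof -
      have "P \<subseteq> {..<n}" "Q \<subseteq> {..<n}" by (auto simp: P_def Q_def)
      then show ?thesis by (simp add: sum.distrib sum.If_cases Int_absorb1 Int_absorb2 Int_commute)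
    qed
    finally show ?thesis by simp
  qed
  define V where "V = a ` P \<union> b ` Q"
  have finV: "finite V" using finP finQ by (simp add: V_def)
  have cardV: "card V = 2 * m"
    using card_Un_disjoint[of "a ` P" "b ` Q"] finP finQ disj card_image[OF injP] card_image[OF injQ] cPQ
    unfolding V_def m_def by simp
  have V0: "0 \<notin> V" by (auto simp: V_def P_def Q_def)
  have sumV': "2 * m * (2 * m + 1) \<le> 2 * \<Sum>V" using sumV[OF finV V0] cardV by simp
  have sV: "\<Sum>V = (\<Sum>i\<in>P. a i) + (\<Sum>i\<in>Q. b i)"
    unfolding V_def using sum.union_disjoint[of "a ` P" "b ` Q" id] finP finQ disj
      sum.reindex[OF injP, of id] sum.reindex[OF injQ, of id] by simp
  have s1: "(\<Sum>i\<in>P. a i + b i) + card P = 2 * (\<Sum>i\<in>P. a i)"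
  proof -
    have "(\<Sum>i\<in>P. a i + b i) + card P = (\<Sum>i\<in>P. a i + b i + 1)" by (simp add: sum.distrib sum_Suc)
    also have "\<dots> = (\<Sum>i\<in>P. 2 * a i)" by (rule sum.cong) (auto simp: P_def)
    finally show ?thesis by (simp add: sum_distrib_left)
  qed
  have s2: "(\<Sum>i\<in>Q. a i + b i) + card Q = 2 * (\<Sum>i\<in>Q. b i)"
  proof -
    have "(\<Sum>i\<in>Q. a i + b i) + card Q = (\<Sum>i\<in>Q. a i + b i + 1)" by (simp add: sum.distrib sum_Suc)
    also have "\<dots> = (\<Sum>i\<in>Q. 2 * b i)" by (rule sum.cong) (auto simp: Q_def)
    finally show ?thesis by (simp add: sum_distrib_left)
  qed
  have "(\<Sum>i\<in>P \<union> Q. a i + b i) \<le> (\<Sum>i<n. a i + b i)"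
    by (rule sum_mono2) (auto simp: P_def Q_def)
  then have "(\<Sum>i\<in>P. a i + b i) + (\<Sum>i\<in>Q. a i + b i) \<le> 2 * n"
    using sum.union_disjoint[OF finP finQ PQ, of "\<lambda>i. a i + b i"] sa sb by (simp add: sum.distrib)
  then have key: "2 * m * m \<le> n" using s1 s2 sV sumV' cPQ unfolding m_def by (simp add: algebra_simps)
  have "(1/2) * (\<Sum>i<n. \<bar>real (a i) - real (b i)\<bar>) = real m" using absum cPQ unfolding m_def by simp
  also have "real m \<le> sqrt (real n / 2)"
  proof (rule real_le_rsqrt)
    have "2 * real m * real m \<le> real n" using key by (metis of_nat_le_iff of_nat_mult of_nat_numeral)
    then show "(real m)\<^sup>2 \<le> real n / 2" by (simp add: power2_eq_square)
  qed
  finally show ?thesis .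
qed



lemma sorted_of_before:
  "distinct p \<Longrightarrow> (\<forall>x\<in>set p. \<forall>y\<in>set p. x < y \<longrightarrow> before p x y) \<Longrightarrow> sorted_wrt (<) p"
proof (induction p)
  case Nil then show ?case by simp
next
  case (Cons a p)
  have "\<forall>y\<in>set p. a < y"
  proof
    fix y assume y: "y \<in> set p"
    then have "y \<noteq> a" using Cons.prems(1) by auto
    show "a < y"
    proof (rule ccontr)
      assume "\<not> a < y"
      then have "y < a" using \<open>y \<noteq> a\<close> by simp
      then have "before (a#p) y a" using Cons.prems(2) y by auto
      then show False using Cons.prems(1) by (auto dest: before_set)
    qed
  qed
  moreover have "\<forall>x\<in>set p. \<forall>y\<in>set p. x < y \<longrightarrow> before p x y"
  proof (intro ballI impI)
    fix x y assume "x \<in> set p" "y \<in> set p" "x < y"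
    then have "before (a#p) x y" using Cons.prems(2) by auto
    then show "before p x y" using \<open>x \<in> set p\<close> Cons.prems(1) by auto
  qed
  ultimately show ?case using Cons by simp
qed

lemma before_chain:
  assumes "distinct p" "\<forall>k. k \<in> set p \<and> Suc k \<in> set p \<longrightarrow> before p k (Suc k)"
    "set p = {1..n}"
  shows "x \<in> set p \<Longrightarrow> y \<in> set p \<Longrightarrow> x < y \<Longrightarrow> before p x y"
proof (induction y)
  case 0 then show ?case by simp
next
  case (Suc y)
  show ?case
  proof (cases "x = y")
    case True then show ?thesis using Suc.prems assms(2) by simp
  next
    case False
    then have "x < y" using Suc.prems by simp
    then have yin: "y \<in> set p" using Suc.prems assms(3) by auto
    then have "before p x y" using Suc.IH Suc.prems \<open>x < y\<close> by simp
    moreover have "before p y (Suc y)" using assms(2) yin Suc.prems by simp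
    ultimately show ?thesis using before_trans[OF assms(1)] by blast
  qed
qed

lemma is_perm_sorted:
  assumes "is_perm n p" "\<forall>k. 1 \<le> k \<and> k \<le> n - 1 \<longrightarrow> \<not> before p (Suc k) k"
  shows "p = [1..<Suc n]"
proof -
  have d: "distinct p" and s: "set p = {1..n}" using assms(1) by (auto simp: is_perm_def)
  have ch: "\<forall>k. k \<in> set p \<and> Suc k \<in> set p \<longrightarrow> before p k (Suc k)"
  proof (intro allI impI)
    fix k assume kk: "k \<in> set p \<and> Suc k \<in> set p"
    then have "1 \<le> k" "k \<le> n - 1" using s by auto
    then have "\<not> before p (Suc k) k" using assms(2) by blast
    moreover have "before p k (Suc k) \<or> before p (Suc k) k" using before_total[of k p "Suc k"] kk by simp
    ultimately show "before p k (Suc k)" by blast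
  qed
  have "\<forall>x\<in>set p. \<forall>y\<in>set p. x < y \<longrightarrow> before p x y"
    using before_chain[OF d ch s] by blast
  then have "sorted_wrt (<) p" by (rule sorted_of_before[OF d])
  moreover have "sorted_wrt (<) [1..<Suc n]" by (rule sorted_wrt_upt)
  moreover have "set [1..<Suc n] = set p" unfolding s set_upt by (rule atLeastLessThanSuc_atLeastAtMost)
  ultimately show ?thesis
    using sorted_distinct_set_unique[of p "[1..<Suc n]"] unfolding strict_sorted_iff by (simp del: upt_Suc)
qed


lemma before_pos: "before w x y \<Longrightarrow> \<exists>i j. i < j \<and> j < length w \<and> w!i = x \<and> w!j = y"
proof (induction w)
  case Nil then show ?case by simp
next
  case (Cons a w)
  show ?case
  proof (cases "a = x \<and> y \<in> set w")
    case True
    then obtain j where "j < length w" "w!j = y" by (metis in_set_conv_nth)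
    then show ?thesis using True by (intro exI[of _ 0] exI[of _ "Suc j"]) auto
  next
    case False
    then have "before w x y" using Cons.prems by auto
    then obtain i j where "i < j" "j < length w" "w!i = x" "w!j = y" using Cons.IH by blast
    then show ?thesis by (intro exI[of _ "Suc i"] exI[of _ "Suc j"]) auto
  qed
qed

definition wt :: "nat list \<Rightarrow> nat" where
  "wt p = (\<Sum>j<length p. j * p!j)"

lemma wt_increase:
  assumes d: "distinct p" and ii: "i < i'" "i' < length p" and pi: "p!i = Suc k" and pi': "p!i' = k"
  shows "wt p < wt (map (adj_swap k) p)"
proof -
  let ?q = "map (adj_swap k) p"
  define D where "D j = int j * (int (adj_swap k (p!j)) - int (p!j))" for j
  have "int (wt ?q) = (\<Sum>j<length p. int j * int (p!j) + D j)"
    unfolding wt_def D_def by (simp add: of_nat_sum algebra_simps)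
  also have "\<dots> = int (wt p) + (\<Sum>j<length p. D j)"
    unfolding wt_def by (simp add: sum.distrib of_nat_sum)
  also have "(\<Sum>j<length p. D j) = (\<Sum>j\<in>{i,i'}. D j)"
  proof (rule sum.mono_neutral_right)
    show "{i, i'} \<subseteq> {..<length p}" using ii by auto
    show "\<forall>j\<in>{..<length p} - {i, i'}. D j = 0"
    proof
      fix j assume j: "j \<in> {..<length p} - {i, i'}"
      have "p!j \<noteq> Suc k" using d j ii pi by (metis DiffE insertCI lessThan_iff nth_eq_iff_index_eq order.strict_trans)
      moreover have "p!j \<noteq> k" using d j ii pi' by (metis DiffE insertCI lessThan_iff nth_eq_iff_index_eq)
      ultimately show "D j = 0" by (simp add: D_def adj_swap_def)
    qed
  qed simp
  also have "(\<Sum>j\<in>{i,i'}. D j) = int i' - int i"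
    using ii pi pi' by (simp add: D_def adj_swap_def)
  finally show ?thesis using ii by simp
qed

lemma wt_bound: "is_perm n p \<Longrightarrow> wt p \<le> n * n * n"
proof -
  assume h: "is_perm n p"
  then have l: "length p = n" using distinct_card[of p] by (auto simp: is_perm_def)
  have "wt p \<le> (\<Sum>j<n. n * n)"
    unfolding wt_def l
  proof (rule sum_mono)
    fix j assume "j \<in> {..<n}"
    then have "j \<le> n" "p!j \<le> n" using h l by (auto simp: is_perm_def dest!: nth_mem)
    then show "j * p!j \<le> n * n" by (simp add: mult_le_mono)
  qed
  then show ?thesis by simp
qed

lemma adj_step_sym: "adj_step n p q \<Longrightarrow> adj_step n q p"
  unfolding adj_step_def by (auto simp: comp_def)

lemma adj_step_perm: "is_perm n p \<Longrightarrow> 1 \<le> k \<Longrightarrow> k \<le> n - 1 \<Longrightarrow> is_perm n (map (adj_swap k) p)"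
proof -
  assume h: "is_perm n p" "1 \<le> k" "k \<le> n - 1"
  have "distinct (map (adj_swap k) p)" using h inj_on_subset[OF adj_swap_inj[of k]] by (auto simp: is_perm_def distinct_map)
  moreover have "adj_swap k ` {1..n} = {1..n}"
  proof
    show "adj_swap k ` {1..n} \<subseteq> {1..n}" using h(2,3) by (auto simp: adj_swap_def)
    show "{1..n} \<subseteq> adj_swap k ` {1..n}"
    proof
      fix x assume "x \<in> {1..n}"
      then have "adj_swap k x \<in> {1..n}" using h(2,3) by (auto simp: adj_swap_def)
      then show "x \<in> adj_swap k ` {1..n}" by (metis adj_swap_inv image_eqI)
    qed
  qed
  ultimately show ?thesis using h(1) by (auto simp: is_perm_def)
qed

lemma reach_sorted: "is_perm n p \<Longrightarrow> (adj_step n)\<^sup>*\<^sup>* p [1..<Suc n]"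
proof (induction "n*n*n - wt p" arbitrary: p rule: less_induct)
  case less
  show ?case
  proof (cases "\<forall>k. 1 \<le> k \<and> k \<le> n - 1 \<longrightarrow> \<not> before p (Suc k) k")
    case True
    then show ?thesis using is_perm_sorted[OF less.prems] by simp
  next
    case False
    then obtain k where k: "1 \<le> k" "k \<le> n - 1" "before p (Suc k) k" by blast
    let ?q = "map (adj_swap k) p"
    have q: "is_perm n ?q" using adj_step_perm[OF less.prems k(1,2)] .
    obtain i i' where ii: "i < i'" "i' < length p" "p!i = Suc k" "p!i' = k" using before_pos[OF k(3)] by blast
    have "wt p < wt ?q" using wt_increase[OF _ ii] less.prems by (simp add: is_perm_def)
    moreover have "wt ?q \<le> n*n*n" using wt_bound[OF q] .
    ultimately have "n*n*n - wt ?q < n*n*n - wt p" by simp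
    then have "(adj_step n)\<^sup>*\<^sup>* ?q [1..<Suc n]" using less.hyps q by blast
    moreover have "adj_step n p ?q" using k unfolding adj_step_def by blast
    ultimately show ?thesis by (rule converse_rtranclp_into_rtranclp[rotated])
  qed
qed

lemma rtranclp_sym: "(\<And>x y. R x y \<Longrightarrow> R y x) \<Longrightarrow> R\<^sup>*\<^sup>* x y \<Longrightarrow> R\<^sup>*\<^sup>* y x"
proof -
  assume s: "\<And>x y. R x y \<Longrightarrow> R y x" and r: "R\<^sup>*\<^sup>* x y"
  from r show ?thesis
  proof (induction rule: rtranclp_induct)
    case base then show ?case by simp
  next
    case (step y z)
    then show ?case using s by (meson converse_rtranclp_into_rtranclp)
  qed
qed

lemma connected: "is_perm n p \<Longrightarrow> is_perm n q \<Longrightarrow> \<exists>m. (adj_step n ^^ m) p q"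
proof -
  assume "is_perm n p" "is_perm n q"
  then have "(adj_step n)\<^sup>*\<^sup>* p [1..<Suc n]" "(adj_step n)\<^sup>*\<^sup>* q [1..<Suc n]" using reach_sorted by auto
  then have "(adj_step n)\<^sup>*\<^sup>* p q" using rtranclp_sym[of "adj_step n", OF adj_step_sym] by (meson rtranclp_trans)
  then show ?thesis by (rule rtranclp_imp_relpowp)
qed


lemma main_case:
  assumes pp: "is_perm n \<pi>" and k1: "1 \<le> k" "k \<le> n - 1" and bf: "before \<pi> k (Suc k)"
    and tau: "\<tau> = map (adj_swap k) \<pi>"
  shows "Delta n (rsk_shape \<pi>) (rsk_shape \<tau>) \<le> sqrt (real n / 2)"
proof -
  have tp: "is_perm n \<tau>" using adj_step_perm[OF pp k1] tau by simp
  have d: "distinct \<pi>" "distinct \<tau>" using pp tp by (auto simp: is_perm_def)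
  have l: "length \<pi> = n" "length \<tau> = n" using pp tp distinct_card[of \<pi>] distinct_card[of \<tau>]
    by (auto simp: is_perm_def)
  define a where "a = part (rsk_shape \<pi>)"
  define b where "b = part (rsk_shape \<tau>)"
  note SA = shape_props[OF d(1) l(1), folded a_def]
  note SB = shape_props[OF d(2) l(2), folded b_def]
  have H4: "(\<Sum>i<kk. b i) \<le> (\<Sum>i<kk. a i) \<and> (\<Sum>i<kk. a i) \<le> (\<Sum>i<kk. b i) + 1" for kk
    using inc_swap[OF bf, of kk] inc_shape[OF d(1), of kk] inc_shape[OF d(2), of kk] tau
    unfolding a_def b_def by simp
  have bt: "before (rev \<tau>) k (Suc k)"
  proof -
    have "before \<tau> (adj_swap k k) (adj_swap k (Suc k))" using bf tau before_map[OF adj_swap_inj] by simp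
    then show ?thesis by (simp add: before_rev adj_swap_def)
  qed
  have mr: "map (adj_swap k) (rev \<tau>) = rev \<pi>" using tau by (simp add: rev_map comp_def)
  have H5: "(\<Sum>i<n. min (a i) c) \<le> (\<Sum>i<n. min (b i) c) \<and> (\<Sum>i<n. min (b i) c) \<le> (\<Sum>i<n. min (a i) c) + 1" for c
    using inc_swap[OF bt, of c] mr dec_shape[OF d(1), of n c] dec_shape[OF d(2), of n c] l
    unfolding a_def b_def by simp
  have "(1/2) * (\<Sum>i<n. \<bar>real (a i) - real (b i)\<bar>) \<le> sqrt (real n / 2)"
    by (rule comb[OF SA(1) SB(1) SA(2) SB(2) SA(3) SB(3) H4 H5])
  then show ?thesis unfolding Delta_def a_def b_def .
qed

lemma Delta_sym: "Delta n x y = Delta n y x"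
  unfolding Delta_def by (simp add: abs_minus_commute)

theorem theorem2:
  fixes n :: nat and \<pi> \<tau> :: "nat list"
  assumes "is_perm n \<pi>" and "is_perm n \<tau>"
    and "perm_dist n \<pi> \<tau> = 1"
  shows "Delta n (rsk_shape \<pi>) (rsk_shape \<tau>) \<le> sqrt (real n / 2)"
proof -
  have "\<exists>m. (adj_step n ^^ m) \<pi> \<tau>" using connected[OF assms(1,2)] .
  then have "(adj_step n ^^ (LEAST m. (adj_step n ^^ m) \<pi> \<tau>)) \<pi> \<tau>" by (rule LeastI_ex)
  then have "(adj_step n ^^ 1) \<pi> \<tau>" using assms(3) unfolding perm_dist_def by simp
  then have "adj_step n \<pi> \<tau>" by (simp only: relpowp_1)
  then obtain k where k: "1 \<le> k" "k \<le> n - 1" "\<tau> = map (adj_swap k) \<pi>" unfolding adj_step_def by blast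
  have mem: "k \<in> set \<pi>" "Suc k \<in> set \<pi>" using assms(1) k by (auto simp: is_perm_def)
  then have "before \<pi> k (Suc k) \<or> before \<pi> (Suc k) k" using before_total by simp
  then show ?thesis
  proof
    assume "before \<pi> k (Suc k)"
    then show ?thesis using main_case[OF assms(1) k(1,2) _ k(3)] by simp
  next
    assume b: "before \<pi> (Suc k) k"
    have "before \<tau> (adj_swap k (Suc k)) (adj_swap k k)" using b k(3) before_map[OF adj_swap_inj] by simp
    then have bt: "before \<tau> k (Suc k)" by (simp add: adj_swap_def)
    have pt: "\<pi> = map (adj_swap k) \<tau>" using k(3) by (simp add: comp_def)
    have "Delta n (rsk_shape \<tau>) (rsk_shape \<pi>) \<le> sqrt (real n / 2)"
      using main_case[OF assms(2) k(1,2) bt pt] .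
    then show ?thesis by (simp add: Delta_sym)
  qed
qed


end
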